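(* Let $m\geq 2$, $a\geq m$ and $b\geq m-1$. Then for all $n$ sufficiently large, in $\mathbb{Z}[x_1,\dots,x_n]^{\Sigma_n}$, $$C_m\bigl(s(a)\,s(1^b)\,s(1^{m-2})\,s(1^{m-3})\cdots s(1)\bigr)=s(a+1,m-1,m-2,\ldots,2,1^{b-m+1})+s(a,m-1,m-2,\ldots,2,1^{b-m+2}).$$
   Context: For a partition $\lambda$ with at most $n$ parts, $s(\lambda)$ denotes the Schur polynomial in $x_1,\dots,x_n$. $1^k$ denotes $k$ parts equal to $1$; so $(a,m-1,\dots,2,1^{k})$ is the partition with parts $a,m-1,m-2,\dots,2$ followed by $k$ ones. For an integer $m\geq0$, a partition $\lambda$ is $m$-adapted if $\lambda_i>m-i$ for every $i\geq1$ with $\lambda_i>0$. $C_m$ is the additive endomorphism of the ring of symmetric polynomials with $C_m(s(\lambda))=s(\lambda)$ if $\lambda$ is $m$-adapted and $0$ otherwise. *)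

theory Defs
  imports Main "HOL-Library.Poly_Mapping"
begin

text \<open>Polynomials with integer coefficients in variables x_0, x_1, ... :
  finitely supported maps from exponent vectors to coefficients.
  The variable x_{k+1} of the paper is represented by index k.\<close>
type_synonym ipoly = "(nat \<Rightarrow>\<^sub>0 nat) \<Rightarrow>\<^sub>0 int"

definition is_partition :: "nat list \<Rightarrow> bool" where
  "is_partition lam \<longleftrightarrow> sorted_wrt (\<ge>) lam \<and> (\<forall>x\<in>set lam. 0 < x)"

definition cells :: "nat list \<Rightarrow> (nat \<times> nat) set" where
  "cells lam = {(i, j). i < length lam \<and> j < lam ! i}"

text \<open>Semistandard Young tableaux of shape lam with entries in {0..<n}
  (standing for 1..n); normalised to be 0 outside the diagram.\<close>
definition ssyt :: "nat \<Rightarrow> nat list \<Rightarrow> (nat \<Rightarrow> nat \<Rightarrow> nat) set" where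
  "ssyt n lam = {T.
     (\<forall>i j. (i, j) \<notin> cells lam \<longrightarrow> T i j = 0) \<and>
     (\<forall>(i, j)\<in>cells lam. T i j < n) \<and>
     (\<forall>i j. (i, Suc j) \<in> cells lam \<longrightarrow> T i j \<le> T i (Suc j)) \<and>
     (\<forall>i j. (Suc i, j) \<in> cells lam \<longrightarrow> T i j < T (Suc i) j)}"

definition tab_exp :: "nat list \<Rightarrow> (nat \<Rightarrow> nat \<Rightarrow> nat) \<Rightarrow> (nat \<Rightarrow>\<^sub>0 nat)" where
  "tab_exp lam T = (\<Sum>(i, j)\<in>cells lam. Poly_Mapping.single (T i j) 1)"

definition schur :: "nat \<Rightarrow> nat list \<Rightarrow> ipoly" where
  "schur n lam = (\<Sum>T\<in>ssyt n lam. Poly_Mapping.single (tab_exp lam T) 1)"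

text \<open>m-adapted: lam_i > m - i for every i >= 1 with lam_i > 0 (1-indexed).\<close>
definition adapted :: "nat \<Rightarrow> nat list \<Rightarrow> bool" where
  "adapted m lam \<longleftrightarrow> (\<forall>k < length lam. int (lam ! k) > int m - int (Suc k))"

definition schur_expansion :: "nat \<Rightarrow> ipoly \<Rightarrow> (nat list \<Rightarrow> int) \<Rightarrow> bool" where
  "schur_expansion n f c \<longleftrightarrow>
     (\<forall>lam. c lam \<noteq> 0 \<longrightarrow> is_partition lam \<and> length lam \<le> n) \<and>
     finite {lam. c lam \<noteq> 0} \<and>
     f = (\<Sum>lam | c lam \<noteq> 0. of_int (c lam) * schur n lam)"

definition Cop :: "nat \<Rightarrow> nat \<Rightarrow> ipoly \<Rightarrow> ipoly" where
  "Cop m n f = (let c = (THE c. schur_expansion n f c) in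
     (\<Sum>lam | c lam \<noteq> 0 \<and> adapted m lam. of_int (c lam) * schur n lam))"

end

theory Submission
  imports Defs "HOL-Library.FuncSet"
begin
definition pt :: "nat list \<Rightarrow> nat \<Rightarrow> nat" where
  "pt lam i = (if i < length lam then lam ! i else 0)"

lemma cells_pt: "(i, j) \<in> cells lam \<longleftrightarrow> j < pt lam i"
  by (auto simp: cells_def pt_def)

lemma finite_cells: "finite (cells lam)"
proof -
  have "cells lam \<subseteq> {..<length lam} \<times> {..<Max (insert 0 (set lam))}"
    by (auto simp: cells_def intro!: order.strict_trans2[OF _ Max_ge])
  then show ?thesis by (rule finite_subset) auto
qed

lemma is_partition_pt:
  "is_partition lam \<longleftrightarrow> (\<forall>i. pt lam (Suc i) \<le> pt lam i) \<and> (\<forall>i<length lam. 0 < pt lam i)"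
proof
  assume "is_partition lam"
  then show "(\<forall>i. pt lam (Suc i) \<le> pt lam i) \<and> (\<forall>i<length lam. 0 < pt lam i)"
    unfolding is_partition_def pt_def
    by (auto simp: sorted_wrt_iff_nth_less)
next
  assume a: "(\<forall>i. pt lam (Suc i) \<le> pt lam i) \<and> (\<forall>i<length lam. 0 < pt lam i)"
  have mono: "pt lam j \<le> pt lam i" if "i \<le> j" for i j
    using that
  proof (induction j)
    case 0 then show ?case by simp
  next
    case (Suc j)
    then show ?case using a by (metis le_SucE le_trans order_refl)
  qed
  show "is_partition lam"
    unfolding is_partition_def sorted_wrt_iff_nth_less
  proof safe
    fix i j assume "i < j" "j < length lam"
    then show "lam ! j \<le> lam ! i" using mono[of i j] by (simp add: pt_def)
  next
    fix x assume "x \<in> set lam"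
    then obtain i where "i < length lam" "lam ! i = x" by (auto simp: in_set_conv_nth)
    then show "0 < x" using a by (auto simp: pt_def)
  qed
qed

lemma part_mono: "is_partition lam \<Longrightarrow> i \<le> j \<Longrightarrow> pt lam j \<le> pt lam i"
  unfolding is_partition_def pt_def
  by (auto simp: sorted_wrt_iff_nth_less dest: le_neq_implies_less)

lemma part_pos: "is_partition lam \<Longrightarrow> (0 < pt lam i) = (i < length lam)"
  by (auto simp: is_partition_pt) (auto simp: pt_def split: if_splits)

lemma partition_eqI:
  assumes "is_partition a" "is_partition b" "\<And>i. pt a i = pt b i"
  shows "a = b"
proof -
  have "length a = length b"
  proof (rule ccontr)
    assume "length a \<noteq> length b"
    then consider "length a < length b" | "length b < length a" by linarith
    then show False
    proof cases
      case 1 then show False using part_pos[OF assms(1), of "length a"] part_pos[OF assms(2), of "length a"] assms(3)[of "length a"] by simp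
    next
      case 2 then show False using part_pos[OF assms(1), of "length b"] part_pos[OF assms(2), of "length b"] assms(3)[of "length b"] by simp
    qed
  qed
  then show ?thesis using assms(3) by (auto intro!: nth_equalityI simp: pt_def) (metis)
qed

lemma sum_list_pt: "length lam \<le> L \<Longrightarrow> sum_list lam = (\<Sum>i<L. pt lam i)"
proof -
  assume L: "length lam \<le> L"
  have "sum_list lam = (\<Sum>i<length lam. lam ! i)" by (simp add: sum_list_sum_nth atLeast0LessThan)
  also have "\<dots> = (\<Sum>i<length lam. pt lam i)" by (simp add: pt_def)
  also have "\<dots> = (\<Sum>i<L. pt lam i)"
    by (rule sum.mono_neutral_left) (use L in \<open>auto simp: pt_def\<close>)
  finally show ?thesis .
qed

lemma ssyt_iff:
  "T \<in> ssyt n lam \<longleftrightarrow>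
    (\<forall>i j. pt lam i \<le> j \<longrightarrow> T i j = 0) \<and>
    (\<forall>i j. j < pt lam i \<longrightarrow> T i j < n) \<and>
    (\<forall>i j. Suc j < pt lam i \<longrightarrow> T i j \<le> T i (Suc j)) \<and>
    (\<forall>i j. j < pt lam (Suc i) \<longrightarrow> T i j < T (Suc i) j)"
  unfolding ssyt_def by (auto simp: cells_pt not_less)

lemma ssyt_row_mono:
  assumes "T \<in> ssyt n lam" "j \<le> j'" "j' < pt lam i"
  shows "T i j \<le> T i j'"
  using assms(2,3)
proof (induction j')
  case 0 then show ?case by simp
next
  case (Suc j')
  show ?case
  proof (cases "j = Suc j'")
    case True then show ?thesis by simp
  next
    case False
    then have "T i j \<le> T i j'" using Suc by simp
    also have "T i j' \<le> T i (Suc j')" using assms(1) Suc.prems by (auto simp: ssyt_iff)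
    finally show ?thesis .
  qed
qed

lemma ssyt_ge_row:
  assumes "T \<in> ssyt n lam" "is_partition lam" "j < pt lam i"
  shows "i \<le> T i j"
  using assms(3)
proof (induction i)
  case 0 then show ?case by simp
next
  case (Suc i)
  have "T i j < T (Suc i) j" using assms(1) Suc.prems by (auto simp: ssyt_iff)
  moreover have "j < pt lam i" using part_mono[OF assms(2), of i "Suc i"] Suc.prems by simp
  ultimately show ?case using Suc.IH by simp
qed

lemma ssyt_col_mono:
  assumes "T \<in> ssyt n lam" "is_partition lam" "i < i'" "j < pt lam i'"
  shows "T i j < T i' j"
  using assms(3,4)
proof (induction i')
  case 0 then show ?case by simp
next
  case (Suc i')
  have "T i' j < T (Suc i') j" using assms(1) Suc.prems by (auto simp: ssyt_iff)
  moreover have "j < pt lam i'" using part_mono[OF assms(2), of i' "Suc i'"] Suc.prems by simp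
  ultimately show ?case using Suc.IH Suc.prems by (cases "i = i'") auto
qed

lemma ssyt_long_empty:
  assumes "is_partition lam" "n < length lam"
  shows "ssyt n lam = {}"
proof (rule ccontr)
  assume "ssyt n lam \<noteq> {}"
  then obtain T where T: "T \<in> ssyt n lam" by auto
  have "0 < pt lam (length lam - 1)" using part_pos[OF assms(1)] assms(2) by simp
  then have "length lam - 1 \<le> T (length lam - 1) 0" "T (length lam - 1) 0 < n"
    using ssyt_ge_row[OF T assms(1)] T by (auto simp: ssyt_iff)
  then show False using assms(2) by simp
qed

definition addbox :: "nat list \<Rightarrow> nat \<Rightarrow> nat list" where
  "addbox mu r = (if r < length mu then mu[r := Suc (mu ! r)] else mu @ [1])"

lemma pt_addbox: "r \<le> length mu \<Longrightarrow> pt (addbox mu r) i = pt mu i + (if i = r then 1 else 0)"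
  by (auto simp: addbox_def pt_def nth_append)

lemma length_addbox: "r \<le> length mu \<Longrightarrow> length (addbox mu r) = max (length mu) (Suc r)"
  by (auto simp: addbox_def)

lemma partition_addbox:
  assumes "is_partition mu" "r \<le> length mu" "0 < r \<Longrightarrow> pt mu r < pt mu (r - 1)"
  shows "is_partition (addbox mu r)"
  unfolding is_partition_pt
proof safe
  fix i
  show "pt (addbox mu r) (Suc i) \<le> pt (addbox mu r) i"
    using assms part_mono[OF assms(1), of i "Suc i"] by (auto simp: pt_addbox)
next
  fix i assume "i < length (addbox mu r)"
  then show "0 < pt (addbox mu r) i"
    using assms part_pos[OF assms(1), of i] by (auto simp: pt_addbox length_addbox)
qed

lemma sum_list_addbox: "r \<le> length mu \<Longrightarrow> sum_list (addbox mu r) = Suc (sum_list mu)"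
proof -
  assume r: "r \<le> length mu"
  let ?L = "Suc (length mu)"
  have "sum_list (addbox mu r) = (\<Sum>i<?L. pt (addbox mu r) i)"
    by (rule sum_list_pt) (use r in \<open>simp add: length_addbox\<close>)
  also have "\<dots> = (\<Sum>i<?L. pt mu i + (if i = r then 1 else 0))" using r by (simp add: pt_addbox)
  also have "\<dots> = (\<Sum>i<?L. pt mu i) + 1" using r by (simp add: sum.distrib)
  also have "(\<Sum>i<?L. pt mu i) = sum_list mu" by (rule sum_list_pt[symmetric]) simp
  finally show ?thesis by simp
qed

definition canb :: "(nat \<Rightarrow> nat \<Rightarrow> nat) \<Rightarrow> nat list \<Rightarrow> nat \<Rightarrow> nat \<Rightarrow> bool" where
  "canb T mu x r \<longleftrightarrow> (\<exists>j < pt mu r. x < T r j)"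

definition bpos :: "(nat \<Rightarrow> nat \<Rightarrow> nat) \<Rightarrow> nat list \<Rightarrow> nat \<Rightarrow> nat \<Rightarrow> nat" where
  "bpos T mu x r = (LEAST j. j < pt mu r \<and> x < T r j)"

lemma bpos: assumes "canb T mu x r"
  shows "bpos T mu x r < pt mu r" "x < T r (bpos T mu x r)"
    "\<And>j. j < bpos T mu x r \<Longrightarrow> T r j \<le> x"
proof -
  obtain j where "j < pt mu r \<and> x < T r j" using assms by (auto simp: canb_def)
  then have "bpos T mu x r < pt mu r \<and> x < T r (bpos T mu x r)"
    unfolding bpos_def by (rule LeastI)
  then show "bpos T mu x r < pt mu r" "x < T r (bpos T mu x r)" by auto
  fix j assume "j < bpos T mu x r"
  then show "T r j \<le> x"
    using not_less_Least[of j "\<lambda>j. j < pt mu r \<and> x < T r j"]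
      \<open>bpos T mu x r < pt mu r \<and> _\<close> unfolding bpos_def by auto
qed

lemma bpos_le: "j < pt mu r \<Longrightarrow> x < T r j \<Longrightarrow> bpos T mu x r \<le> j"
  unfolding bpos_def by (rule Least_le) simp

lemma canb_length: "canb T mu x r \<Longrightarrow> r < length mu"
  by (auto simp: canb_def pt_def split: if_splits)

function insr :: "(nat \<Rightarrow> nat \<Rightarrow> nat) \<Rightarrow> nat list \<Rightarrow> nat \<Rightarrow> nat \<Rightarrow> (nat \<Rightarrow> nat \<Rightarrow> nat) \<times> nat list \<times> nat" where
  "insr T mu x r = (if canb T mu x r then
      insr (T(r := (T r)(bpos T mu x r := x))) mu (T r (bpos T mu x r)) (Suc r)
    else (T(r := (T r)(pt mu r := x)), addbox mu r, r))"
  by auto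
termination
  by (relation "measure (\<lambda>(T, mu, x, r). length mu - r)") (auto dest: canb_length)

declare insr.simps[simp del]

lemma insr_bump: "canb T mu x r \<Longrightarrow>
  insr T mu x r = insr (T(r := (T r)(bpos T mu x r := x))) mu (T r (bpos T mu x r)) (Suc r)"
  by (subst insr.simps) simp

lemma insr_app: "\<not> canb T mu x r \<Longrightarrow> insr T mu x r = (T(r := (T r)(pt mu r := x)), addbox mu r, r)"
  by (subst insr.simps) simp

lemma insr_basic:
  "insr T mu x r = (W, lam, R) \<Longrightarrow> r \<le> length mu \<Longrightarrow>
    r \<le> R \<and> R \<le> length mu \<and> lam = addbox mu R \<and> (\<forall>i<r. W i = T i) \<and> (R = r \<longleftrightarrow> \<not> canb T mu x r)"
proof (induction T mu x r arbitrary: W lam R rule: insr.induct)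
  case (1 T mu x r)
  show ?case
  proof (cases "canb T mu x r")
    case True
    have rl: "r < length mu" using True by (rule canb_length)
    have e: "insr (T(r := (T r)(bpos T mu x r := x))) mu (T r (bpos T mu x r)) (Suc r) = (W, lam, R)"
      using 1(2) insr_bump[OF True] by simp
    have IH: "Suc r \<le> R \<and> R \<le> length mu \<and> lam = addbox mu R \<and>
       (\<forall>i<Suc r. W i = (T(r := (T r)(bpos T mu x r := x))) i)"
      using 1(1)[OF True e] rl by simp
    then show ?thesis using True by auto
  next
    case False
    with 1(2,3) show ?thesis by (auto simp: insr_app)
  qed
qed


lemma tab_exp_cong: "(\<And>i j. j < pt lam i \<Longrightarrow> T i j = T' i j) \<Longrightarrow> tab_exp lam T = tab_exp lam T'"
  unfolding tab_exp_def by (rule sum.cong) (auto simp: cells_pt)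

lemma tab_exp_upd:
  assumes "p < pt mu r"
  shows "tab_exp mu (T(r := (T r)(p := x))) + Poly_Mapping.single (T r p) 1 = tab_exp mu T + Poly_Mapping.single x 1"
proof -
  let ?T' = "T(r := (T r)(p := x))"
  have c: "(r, p) \<in> cells mu" using assms by (simp add: cells_pt)
  have A: "tab_exp mu T = Poly_Mapping.single (T r p) 1 + (\<Sum>(i, j)\<in>cells mu - {(r,p)}. Poly_Mapping.single (T i j) 1)"
    unfolding tab_exp_def by (subst sum.remove[OF finite_cells c]) simp
  have B: "tab_exp mu ?T' = Poly_Mapping.single x 1 + (\<Sum>(i, j)\<in>cells mu - {(r,p)}. Poly_Mapping.single (?T' i j) 1)"
    unfolding tab_exp_def by (subst sum.remove[OF finite_cells c]) simp
  have C: "(\<Sum>(i, j)\<in>cells mu - {(r,p)}. Poly_Mapping.single (?T' i j) 1) = (\<Sum>(i, j)\<in>cells mu - {(r,p)}. Poly_Mapping.single (T i j) 1)"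
  proof (rule sum.cong[OF refl])
    fix c assume "c \<in> cells mu - {(r,p)}"
    then obtain i j where "c = (i,j)" "(i,j) \<noteq> (r,p)" by (cases c) auto
    then show "(case c of (i, j) \<Rightarrow> Poly_Mapping.single (?T' i j) 1) = (case c of (i, j) \<Rightarrow> Poly_Mapping.single (T i j) 1)"
      by auto
  qed
  show ?thesis unfolding A B C by (simp only: ac_simps)
qed

lemma cells_addbox: "r \<le> length mu \<Longrightarrow> cells (addbox mu r) = insert (r, pt mu r) (cells mu)"
  by (auto simp: cells_pt pt_addbox split: if_splits)

lemma tab_exp_app:
  assumes "r \<le> length mu"
  shows "tab_exp (addbox mu r) (T(r := (T r)(pt mu r := x))) = tab_exp mu T + Poly_Mapping.single x 1"
proof -
  let ?T' = "T(r := (T r)(pt mu r := x))"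
  have nc: "(r, pt mu r) \<notin> cells mu" by (simp add: cells_pt)
  have "tab_exp (addbox mu r) ?T' = Poly_Mapping.single x 1 + (\<Sum>(i, j)\<in>cells mu. Poly_Mapping.single (?T' i j) 1)"
    unfolding tab_exp_def cells_addbox[OF assms] by (subst sum.insert[OF finite_cells nc]) simp
  also have "(\<Sum>(i, j)\<in>cells mu. Poly_Mapping.single (?T' i j) 1) = tab_exp mu T"
    unfolding tab_exp_def by (rule sum.cong) (auto simp: cells_pt)
  finally show ?thesis by (simp only: add.commute)
qed

lemma insr_ssyt:
  assumes "insr T mu x r = (W, lam, R)" "T \<in> ssyt n mu" "is_partition mu" "x < n" "r \<le> length mu"
    "0 < r \<Longrightarrow> \<exists>q < pt mu (r - 1). (\<forall>j\<le>q. T (r - 1) j < x) \<and> (q < pt mu r \<longrightarrow> x < T r q)"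
  shows "W \<in> ssyt n lam \<and> is_partition lam \<and> tab_exp lam W = tab_exp mu T + Poly_Mapping.single x 1"
  using assms
proof (induction T mu x r arbitrary: W lam R rule: insr.induct)
  case (1 T mu x r)
  note ss = 1(3)[unfolded ssyt_iff]
  show ?case
  proof (cases "canb T mu x r")
    case True
    define p where "p = bpos T mu x r"
    define y where "y = T r p"
    define T' where "T' = T(r := (T r)(p := x))"
    have pl: "p < pt mu r" and xy: "x < y" and lft: "\<And>j. j < p \<Longrightarrow> T r j \<le> x"
      using bpos[OF True] unfolding p_def y_def by auto
    have rl: "r < length mu" using True by (rule canb_length)
    have e: "insr T' mu y (Suc r) = (W, lam, R)"
      using 1(2) insr_bump[OF True] unfolding T'_def y_def p_def by simp
    have above: "T (r - 1) p < x" if r0: "0 < r"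
    proof -
      obtain q where q: "q < pt mu (r - 1)" "\<forall>j\<le>q. T (r - 1) j < x" "q < pt mu r \<longrightarrow> x < T r q"
        using 1(7) r0 by blast
      have "p \<le> q"
      proof (cases "q < pt mu r")
        case True
        then show ?thesis using q(3) bpos_le[of q mu r x T] unfolding p_def by simp
      next
        case False then show ?thesis using pl by simp
      qed
      then show ?thesis using q(2) by simp
    qed
    have T'ss: "T' \<in> ssyt n mu"
      unfolding ssyt_iff
    proof (intro conjI allI impI)
      fix i j assume "pt mu i \<le> j" then show "T' i j = 0" using ss pl by (auto simp: T'_def)
    next
      fix i j assume "j < pt mu i" then show "T' i j < n" using ss 1(5) by (auto simp: T'_def)
    next
      fix i j assume a: "Suc j < pt mu i"
      show "T' i j \<le> T' i (Suc j)"
      proof (cases "i = r")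
        case True
        have "x \<le> T r (Suc j)" if "j = p"
          using ssyt_row_mono[OF 1(3), of p "Suc j" r] a True that xy unfolding y_def by simp
        moreover have "T r j \<le> x" if "Suc j = p" using lft that by simp
        ultimately show ?thesis using ss a True by (auto simp: T'_def)
      next
        case False then show ?thesis using ss a by (auto simp: T'_def)
      qed
    next
      fix i j assume a: "j < pt mu (Suc i)"
      have r1: "T r p < T (Suc r) p" if "p < pt mu (Suc r)" using ss that by auto
      show "T' i j < T' (Suc i) j"
      proof (cases "i = r")
        case True
        show ?thesis
        proof (cases "j = p")
          case True
          then have "T r p < T (Suc r) p" using r1 a \<open>i = r\<close> by simp
          then show ?thesis using xy \<open>i = r\<close> True unfolding y_def T'_def by simp
        next
          case False
          then show ?thesis using ss a \<open>i = r\<close> by (auto simp: T'_def)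
        qed
      next
        case False
        show ?thesis
        proof (cases "Suc i = r \<and> j = p")
          case True
          then show ?thesis using above[of] False by (auto simp: T'_def)
        next
          case False2: False
          then show ?thesis using ss a False by (auto simp: T'_def)
        qed
      qed
    qed
    have pre: "\<exists>q < pt mu (Suc r - 1). (\<forall>j\<le>q. T' (Suc r - 1) j < y) \<and> (q < pt mu (Suc r) \<longrightarrow> y < T' (Suc r) q)"
    proof (intro exI conjI allI impI)
      show "p < pt mu (Suc r - 1)" using pl by simp
    next
      fix j assume "j \<le> p"
      then show "T' (Suc r - 1) j < y"
      proof (cases "j = p")
        case False
        then have "T r j \<le> x" using lft \<open>j \<le> p\<close> by simp
        then show ?thesis using xy False by (simp add: T'_def)
      qed (use xy in \<open>simp add: T'_def\<close>)
    next
      assume "p < pt mu (Suc r)"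
      then show "y < T' (Suc r) p" using ss unfolding y_def T'_def by auto
    qed
    have yn: "y < n" using ss pl unfolding y_def by auto
    have IH: "W \<in> ssyt n lam \<and> is_partition lam \<and> tab_exp lam W = tab_exp mu T' + Poly_Mapping.single y 1"
      using 1(1)[OF True, folded p_def, folded y_def, folded T'_def, OF e T'ss 1(4) yn] rl pre by simp
    moreover have "tab_exp mu T' + Poly_Mapping.single y 1 = tab_exp mu T + Poly_Mapping.single x 1"
      unfolding T'_def y_def by (rule tab_exp_upd[OF pl])
    ultimately show ?thesis by simp
  next
    case False
    have W: "W = T(r := (T r)(pt mu r := x))" and lam: "lam = addbox mu r"
      using 1(2) insr_app[OF False] by auto
    have nb: "\<And>j. j < pt mu r \<Longrightarrow> T r j \<le> x" using False by (auto simp: canb_def)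
    have qq: "pt mu r < pt mu (r - 1) \<and> (\<forall>j\<le>pt mu r. T (r - 1) j < x)" if r0: "0 < r"
    proof -
      obtain q where q: "q < pt mu (r - 1)" "\<forall>j\<le>q. T (r - 1) j < x" "q < pt mu r \<longrightarrow> x < T r q"
        using 1(7) r0 by blast
      have "pt mu r \<le> q"
      proof (rule ccontr)
        assume "\<not> pt mu r \<le> q"
        then have "x < T r q" using q(3) by simp
        then show False using nb[of q] \<open>\<not> pt mu r \<le> q\<close> by simp
      qed
      then show ?thesis using q by auto
    qed
    have part: "is_partition lam"
      unfolding lam by (rule partition_addbox[OF 1(4) 1(6)]) (use qq in auto)
    have ptl: "\<And>i. pt lam i = pt mu i + (if i = r then 1 else 0)"
      unfolding lam using 1(6) by (simp add: pt_addbox)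
    have Wss: "W \<in> ssyt n lam"
      unfolding ssyt_iff
    proof (intro conjI allI impI)
      fix i j assume "pt lam i \<le> j" then show "W i j = 0" using ss ptl[of i] by (auto simp: W split: if_splits)
    next
      fix i j assume "j < pt lam i" then show "W i j < n" using ss 1(5) ptl[of i] by (auto simp: W split: if_splits)
    next
      fix i j assume a: "Suc j < pt lam i"
      show "W i j \<le> W i (Suc j)"
      proof (cases "i = r")
        case True then show ?thesis using ss a nb ptl[of i] by (auto simp: W)
      next
        case False then show ?thesis using ss a ptl[of i] by (auto simp: W)
      qed
    next
      fix i j assume a: "j < pt lam (Suc i)"
      show "W i j < W (Suc i) j"
      proof (cases "i = r")
        case True
        then have "j < pt mu (Suc r)" using a ptl[of "Suc i"] by simp
        moreover then have "j < pt mu r" using part_mono[OF 1(4), of r "Suc r"] by simp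
        ultimately show ?thesis using ss True by (auto simp: W)
      next
        case False
        show ?thesis
        proof (cases "Suc i = r")
          case True
          then show ?thesis using qq[of] a ptl[of "Suc i"] ss False
            by (cases "j = pt mu r") (auto simp: W)
        next
          case False2: False
          then show ?thesis using ss a False ptl[of "Suc i"] by (auto simp: W)
        qed
      qed
    qed
    have "tab_exp lam W = tab_exp mu T + Poly_Mapping.single x 1"
      unfolding W lam by (rule tab_exp_app[OF 1(6)])
    then show ?thesis using Wss part by blast
  qed
qed

lemma insr_strict:
  assumes "insr V mu x r = (W, lam, R)" "x' < x" "\<forall>i\<ge>r. W' i = W i" "r \<le> length mu"
  shows "R < snd (snd (insr W' lam x' r))"
  using assms
proof (induction V mu x r arbitrary: W lam R W' x' rule: insr.induct)
  case (1 V mu x r)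
  show ?case
  proof (cases "canb V mu x r")
    case True
    define p where "p = bpos V mu x r"
    define y where "y = V r p"
    define V' where "V' = V(r := (V r)(p := x))"
    have pl: "p < pt mu r" and xy: "x < y" and lft: "\<And>j. j < p \<Longrightarrow> V r j \<le> x"
      using bpos[OF True] unfolding p_def y_def by auto
    have rl: "r < length mu" using True by (rule canb_length)
    have e: "insr V' mu y (Suc r) = (W, lam, R)"
      using 1(2) insr_bump[OF True] unfolding V'_def y_def p_def by simp
    have b: "Suc r \<le> R \<and> R \<le> length mu \<and> lam = addbox mu R \<and> (\<forall>i<Suc r. W i = V' i)"
      using insr_basic[OF e] rl by simp
    have ptr: "pt lam r = pt mu r" using b by (simp add: pt_addbox)
    have Wr: "W' r = (V r)(p := x)" using b 1(4) by (simp add: V'_def fun_upd_def)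
    have cb: "canb W' lam x' r" unfolding canb_def using pl ptr Wr 1(3) by auto
    define p' where "p' = bpos W' lam x' r"
    define y' where "y' = W' r p'"
    have "p' \<le> p" unfolding p'_def by (rule bpos_le) (use pl ptr Wr 1(3) in auto)
    have yy: "y' < y"
    proof (cases "p' = p")
      case True then show ?thesis using Wr xy unfolding y'_def by simp
    next
      case False
      then have "p' < p" using \<open>p' \<le> p\<close> by simp
      then show ?thesis using Wr lft[of p'] xy unfolding y'_def by simp
    qed
    have e2: "insr W' lam x' r = insr (W'(r := (W' r)(p' := x'))) lam y' (Suc r)"
      unfolding p'_def y'_def by (rule insr_bump[OF cb])
    have "R < snd (snd (insr (W'(r := (W' r)(p' := x'))) lam y' (Suc r)))"
      by (rule 1(1)[OF True, folded p_def, folded y_def, folded V'_def, OF e yy])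
        (use 1(4) rl in auto)
    then show ?thesis using e2 by simp
  next
    case False
    have W: "W = V(r := (V r)(pt mu r := x))" and lam: "lam = addbox mu r" and R: "R = r"
      using 1(2) insr_app[OF False] by auto
    have cb: "canb W' lam x' r" unfolding canb_def
      by (rule exI[of _ "pt mu r"]) (use 1(3,4,5) in \<open>auto simp: W lam pt_addbox\<close>)
    have "length mu \<le> length lam" using 1(5) by (simp add: lam length_addbox)
    then have "r \<le> length lam" using 1(5) by simp
    obtain W2 lam2 R2 where e: "insr W' lam x' r = (W2, lam2, R2)" by (cases "insr W' lam x' r") auto
    have "r \<le> R2 \<and> (R2 = r \<longleftrightarrow> \<not> canb W' lam x' r)"
      using insr_basic[OF e \<open>r \<le> length lam\<close>] by simp
    then show ?thesis using cb e R by auto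
  qed
qed

lemma insr_weak:
  assumes "insr V mu x r = (W, lam, R)" "x \<le> x'" "\<forall>i\<ge>r. W' i = W i" "r \<le> length mu"
    "\<forall>i\<ge>r. \<forall>j j'. j \<le> j' \<longrightarrow> j' < pt mu i \<longrightarrow> V i j \<le> V i j'"
  shows "snd (snd (insr W' lam x' r)) \<le> R"
  using assms
proof (induction V mu x r arbitrary: W lam R W' x' rule: insr.induct)
  case (1 V mu x r)
  show ?case
  proof (cases "canb V mu x r")
    case True
    define p where "p = bpos V mu x r"
    define y where "y = V r p"
    define V' where "V' = V(r := (V r)(p := x))"
    have pl: "p < pt mu r" and xy: "x < y" and lft: "\<And>j. j < p \<Longrightarrow> V r j \<le> x"
      using bpos[OF True] unfolding p_def y_def by auto
    have rl: "r < length mu" using True by (rule canb_length)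
    have e: "insr V' mu y (Suc r) = (W, lam, R)"
      using 1(2) insr_bump[OF True] unfolding V'_def y_def p_def by simp
    have b: "Suc r \<le> R \<and> R \<le> length mu \<and> lam = addbox mu R \<and> (\<forall>i<Suc r. W i = V' i)"
      using insr_basic[OF e] rl by simp
    have ptr: "pt lam r = pt mu r" using b by (simp add: pt_addbox)
    have Wr: "W' r = (V r)(p := x)" using b 1(4) by (simp add: V'_def fun_upd_def)
    show ?thesis
    proof (cases "canb W' lam x' r")
      case False
      have "snd (snd (insr W' lam x' r)) = r" using insr_app[OF False] by simp
      then show ?thesis using b by simp
    next
      case cb: True
      define p' where "p' = bpos W' lam x' r"
      define y' where "y' = W' r p'"
      have p'l: "p' < pt mu r" and x'y': "x' < y'" using bpos[OF cb] ptr unfolding p'_def y'_def by auto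
      have "p < p'"
      proof (rule ccontr)
        assume "\<not> p < p'"
        then have "W' r p' \<le> x" using Wr lft[of p'] by (cases "p' = p") auto
        then show False using x'y' 1(3) unfolding y'_def by simp
      qed
      then have yy: "y \<le> y'" using Wr 1(6) p'l unfolding y_def y'_def by auto
      have e2: "insr W' lam x' r = insr (W'(r := (W' r)(p' := x'))) lam y' (Suc r)"
        unfolding p'_def y'_def by (rule insr_bump[OF cb])
      have "snd (snd (insr (W'(r := (W' r)(p' := x'))) lam y' (Suc r))) \<le> R"
        by (rule 1(1)[OF True, folded p_def, folded y_def, folded V'_def, OF e yy])
          (use 1(4,6) rl in \<open>auto simp: V'_def\<close>)
      then show ?thesis using e2 by simp
    qed
  next
    case False
    have W: "W = V(r := (V r)(pt mu r := x))" and lam: "lam = addbox mu r" and R: "R = r"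
      using 1(2) insr_app[OF False] by auto
    have nb: "\<And>j. j < pt mu r \<Longrightarrow> V r j \<le> x" using False by (auto simp: canb_def)
    have "\<not> canb W' lam x' r"
      unfolding canb_def
    proof
      assume "\<exists>j<pt lam r. x' < W' r j"
      then obtain j where j: "j < pt lam r" "x' < W' r j" by auto
      then have "j \<le> pt mu r" using 1(5) by (simp add: lam pt_addbox)
      then have "W' r j \<le> x" using nb[of j] 1(4) by (cases "j = pt mu r") (auto simp: W)
      then show False using j 1(3) by simp
    qed
    then show ?thesis using insr_app R by simp
  qed
qed

lemma insr_inj:
  assumes "insr T1 mu x1 r = insr T2 mu x2 r"
    "\<forall>i j. pt mu i \<le> j \<longrightarrow> T1 i j = 0" "\<forall>i j. pt mu i \<le> j \<longrightarrow> T2 i j = 0"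
    "\<forall>i\<ge>r. \<forall>j j'. j \<le> j' \<longrightarrow> j' < pt mu i \<longrightarrow> T1 i j \<le> T1 i j'"
    "\<forall>i\<ge>r. \<forall>j j'. j \<le> j' \<longrightarrow> j' < pt mu i \<longrightarrow> T2 i j \<le> T2 i j'"
    "r \<le> length mu"
  shows "T1 = T2 \<and> x1 = x2"
  using assms
proof (induction T1 mu x1 r arbitrary: T2 x2 rule: insr.induct)
  case (1 T1 mu x1 r)
  have rowr: "\<And>T x. snd (snd (insr T mu x r)) = r \<longleftrightarrow> \<not> canb T mu x r"
  proof -
    fix T x
    obtain W lam R where e: "insr T mu x r = (W, lam, R)" by (cases "insr T mu x r") auto
    show "snd (snd (insr T mu x r)) = r \<longleftrightarrow> \<not> canb T mu x r"
      using insr_basic[OF e 1(7)] e by simp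
  qed
  have same: "canb T1 mu x1 r = canb T2 mu x2 r" using rowr[of T1 x1] rowr[of T2 x2] 1(2) by metis
  show ?case
  proof (cases "canb T1 mu x1 r")
    case False
    then have c2: "\<not> canb T2 mu x2 r" using same by simp
    have eq: "T1(r := (T1 r)(pt mu r := x1)) = T2(r := (T2 r)(pt mu r := x2))"
      using 1(2) insr_app[OF False] insr_app[OF c2] by simp
    have "x1 = x2" using fun_cong[OF fun_cong[OF eq, of r], of "pt mu r"] by simp
    moreover have "T1 = T2"
    proof (intro ext)
      fix i j
      show "T1 i j = T2 i j"
      proof (cases "i = r \<and> j = pt mu r")
        case True then show ?thesis using 1(3,4) by simp
      next
        case False
        then show ?thesis using fun_cong[OF fun_cong[OF eq, of i], of j] by (auto split: if_splits)
      qed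
    qed
    ultimately show ?thesis by simp
  next
    case True
    then have c2: "canb T2 mu x2 r" using same by simp
    define p1 where "p1 = bpos T1 mu x1 r"
    define p2 where "p2 = bpos T2 mu x2 r"
    define y1 where "y1 = T1 r p1"
    define y2 where "y2 = T2 r p2"
    define T1' where "T1' = T1(r := (T1 r)(p1 := x1))"
    define T2' where "T2' = T2(r := (T2 r)(p2 := x2))"
    have p1l: "p1 < pt mu r" and xy1: "x1 < y1" using bpos[OF True] unfolding p1_def y1_def by auto
    have p2l: "p2 < pt mu r" and xy2: "x2 < y2" using bpos[OF c2] unfolding p2_def y2_def by auto
    have rl: "r < length mu" using True by (rule canb_length)
    have e: "insr T1' mu y1 (Suc r) = insr T2' mu y2 (Suc r)"
      using 1(2) insr_bump[OF True] insr_bump[OF c2] unfolding T1'_def y1_def p1_def T2'_def y2_def p2_def by simp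
    have IH: "T1' = T2' \<and> y1 = y2"
      by (rule 1(1)[OF True, folded p1_def, folded y1_def, folded T1'_def, OF e])
        (use 1(3,4,5,6) rl p1l p2l in \<open>auto simp: T1'_def T2'_def\<close>)
    have m1: "T1 r p1 \<le> T1 r p2" if "p1 \<le> p2" using 1(5) that p2l by auto
    have m2: "T2 r p2 \<le> T2 r p1" if "p2 \<le> p1" using 1(6) that p1l by auto
    have "p1 = p2"
    proof (rule ccontr)
      assume "p1 \<noteq> p2"
      then consider "p1 < p2" | "p2 < p1" by linarith
      then show False
      proof cases
        case 1
        have "T1' r p2 = T1 r p2" using 1 unfolding T1'_def by simp
        moreover have "T2' r p2 = x2" unfolding T2'_def by simp
        ultimately show False using IH m1 1 xy2 unfolding y1_def y2_def by auto
      next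
        case 2
        have "T2' r p1 = T2 r p1" using 2 unfolding T2'_def by simp
        moreover have "T1' r p1 = x1" unfolding T1'_def by simp
        ultimately show False using IH m2 2 xy1 unfolding y1_def y2_def by auto
      qed
    qed
    have "x1 = x2" using fun_cong[OF fun_cong[OF conjunct1[OF IH], of r], of p1] \<open>p1 = p2\<close>
      unfolding T1'_def T2'_def by simp
    moreover have "T1 = T2"
    proof (intro ext)
      fix i j
      show "T1 i j = T2 i j"
      proof (cases "i = r \<and> j = p1")
        case True then show ?thesis using IH \<open>p1 = p2\<close> unfolding y1_def y2_def by simp
      next
        case False
        then show ?thesis using fun_cong[OF fun_cong[OF conjunct1[OF IH], of i], of j] \<open>p1 = p2\<close>
          unfolding T1'_def T2'_def by (auto split: if_splits)
      qed
    qed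
    ultimately show ?thesis by simp
  qed
qed

definition rembox :: "nat list \<Rightarrow> nat \<Rightarrow> nat list" where
  "rembox lam R = (if lam ! R = 1 then take R lam else lam[R := lam ! R - 1])"

locale corner =
  fixes lam :: "nat list" and R :: nat
  assumes part: "is_partition lam" and pos: "0 < pt lam R" and cor: "pt lam (Suc R) < pt lam R"
begin

lemma Rl: "R < length lam" using pos by (auto simp: pt_def split: if_splits)

lemma pt_rembox: "pt (rembox lam R) i = pt lam i - (if i = R then 1 else 0)"
proof (cases "lam ! R = 1")
  case True
  have "pt lam (Suc R) = 0" using cor True Rl by (simp add: pt_def)
  then have "length lam \<le> Suc R" using part_pos[OF part, of "Suc R"] by simp
  then have L: "length lam = Suc R" using Rl by simp
  show ?thesis using True L by (auto simp: rembox_def pt_def)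
next
  case False
  then show ?thesis using Rl by (auto simp: rembox_def pt_def)
qed

lemma length_rembox: "R \<le> length (rembox lam R)"
  using Rl by (auto simp: rembox_def)

lemma partition_rembox: "is_partition (rembox lam R)"
  unfolding is_partition_pt
proof safe
  fix i show "pt (rembox lam R) (Suc i) \<le> pt (rembox lam R) i"
    using part_mono[OF part, of i "Suc i"] cor by (auto simp: pt_rembox)
next
  fix i assume "i < length (rembox lam R)"
  then show "0 < pt (rembox lam R) i"
    using part_pos[OF part, of i] Rl pos
    by (auto simp: rembox_def pt_def nth_list_update split: if_splits)
qed

lemma addbox_rembox: "addbox (rembox lam R) R = lam"
proof (rule partition_eqI[OF partition_addbox[OF partition_rembox length_rembox] part])
  show "pt (rembox lam R) R < pt (rembox lam R) (R - 1)" if "0 < R"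
    using part_mono[OF part, of "R - 1" R] pos that by (auto simp: pt_rembox)
  fix i show "pt (addbox (rembox lam R) R) i = pt lam i"
    using pos by (simp add: pt_addbox[OF length_rembox] pt_rembox)
qed

end

lemma unbump:
  assumes U: "U \<in> ssyt n lam" and cr: "corner lam R"
  shows "\<exists>U' x. U' \<in> ssyt n (rembox lam R) \<and> x < n \<and> insr U' (rembox lam R) x 0 = (U, lam, R)"
proof -
  interpret corner lam R by (rule cr)
  define lam' where "lam' = rembox lam R"
  define c where "c = pt lam R - 1"
  have ptl': "\<And>i. pt lam' i = pt lam i - (if i = R then 1 else 0)" unfolding lam'_def by (rule pt_rembox)
  have cl: "c < pt lam R" "pt lam' R = c" using pos by (auto simp: c_def ptl')
  note Us = U[unfolded ssyt_iff]
  define Inv where "Inv V z r \<longleftrightarrow> V \<in> ssyt n lam' \<and> z < n \<and> (\<forall>i<r. V i = U i) \<and>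
      (\<exists>q. q < pt lam r \<and> z = U r q \<and> (\<forall>j. q \<le> j \<longrightarrow> j < pt lam' r \<longrightarrow> z < V r j))" for V z r
  have main: "\<forall>V z. Inv V z r \<longrightarrow> (\<exists>U' x. U' \<in> ssyt n lam' \<and> x < n \<and> insr U' lam' x 0 = insr V lam' z r)"
    if "r \<le> R" for r
    using that
  proof (induction r)
    case 0 then show ?case by (auto simp: Inv_def)
  next
    case (Suc r0)
    show ?case
    proof (intro allI impI)
      fix V z assume inv: "Inv V z (Suc r0)"
      have Vs: "V \<in> ssyt n lam'" and zn: "z < n" and Vi: "\<forall>i<Suc r0. V i = U i"
        using inv by (auto simp: Inv_def)
      obtain q where q: "q < pt lam (Suc r0)" "z = U (Suc r0) q"
        "\<forall>j. q \<le> j \<longrightarrow> j < pt lam' (Suc r0) \<longrightarrow> z < V (Suc r0) j"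
        using inv by (auto simp: Inv_def)
      have r0R: "r0 < R" using Suc.prems by simp
      have ptr0: "pt lam' r0 = pt lam r0" using r0R by (simp add: ptl')
      have Vr0: "V r0 = U r0" using Vi by simp
      define P where "P j \<longleftrightarrow> j < pt lam r0 \<and> U r0 j < z" for j
      have qle: "q < pt lam r0" using q(1) part_mono[OF part, of r0 "Suc r0"] by simp
      have Pq: "P q" unfolding P_def using qle q Us by auto
      have Pb: "\<And>y. P y \<Longrightarrow> y \<le> pt lam r0" unfolding P_def by auto
      define j where "j = (GREATEST j. P j)"
      have Pj: "P j" unfolding j_def by (rule GreatestI_nat[where P=P, OF Pq Pb])
      have jmax: "\<And>j'. P j' \<Longrightarrow> j' \<le> j" unfolding j_def by (rule Greatest_le_nat[where P=P, OF _ Pb])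
      have qj: "q \<le> j" by (rule jmax[OF Pq])
      have jl: "j < pt lam r0" and Uj: "U r0 j < z" using Pj by (auto simp: P_def)
      define z' where "z' = U r0 j"
      define V' where "V' = V(r0 := (V r0)(j := z))"
      have right: "z \<le> U r0 j'" if "j < j'" "j' < pt lam r0" for j'
        using jmax[of j'] that unfolding P_def by force
      note Vss = Vs[unfolded ssyt_iff]
      have V's: "V' \<in> ssyt n lam'"
        unfolding ssyt_iff
      proof (intro conjI allI impI)
        fix i j'' assume "pt lam' i \<le> j''" then show "V' i j'' = 0"
          using Vss jl ptr0 by (auto simp: V'_def)
      next
        fix i j'' assume "j'' < pt lam' i" then show "V' i j'' < n"
          using Vss zn by (auto simp: V'_def)
      next
        fix i j'' assume a: "Suc j'' < pt lam' i"
        show "V' i j'' \<le> V' i (Suc j'')"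
        proof (cases "i = r0")
          case True
          have "z \<le> U r0 (Suc j'')" if "j'' = j" using right[of "Suc j''"] a True ptr0 that by simp
          moreover have "U r0 j'' < z" if "Suc j'' = j"
            using ssyt_row_mono[OF U, of j'' j r0] jl Uj that by simp
          ultimately show ?thesis using Vss a True Vr0 Us ptr0 by (auto simp: V'_def)
        next
          case False then show ?thesis using Vss a by (auto simp: V'_def)
        qed
      next
        fix i j'' assume a: "j'' < pt lam' (Suc i)"
        show "V' i j'' < V' (Suc i) j''"
        proof (cases "i = r0 \<and> j'' = j")
          case True
          then have "z < V (Suc r0) j" using q(3) qj a by simp
          then show ?thesis using True by (simp add: V'_def)
        next
          case F1: False
          show ?thesis
          proof (cases "Suc i = r0 \<and> j'' = j")
            case True
            have "U i j < U r0 j" using Us jl True by auto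
            then have "V i j < z" using Vi Uj True by simp
            then show ?thesis using True by (simp add: V'_def)
          next
            case False
            then show ?thesis using F1 Vss a by (auto simp: V'_def)
          qed
        qed
      qed
      have inv': "Inv V' z' r0"
        unfolding Inv_def
      proof (intro conjI)
        show "V' \<in> ssyt n lam'" by (rule V's)
        show "z' < n" using Us jl unfolding z'_def by auto
        show "\<forall>i<r0. V' i = U i" using Vi by (auto simp: V'_def)
        show "\<exists>q<pt lam r0. z' = U r0 q \<and> (\<forall>j. q \<le> j \<longrightarrow> j < pt lam' r0 \<longrightarrow> z' < V' r0 j)"
        proof (intro exI[of _ j] conjI allI impI)
          show "j < pt lam r0" by (rule jl)
          show "z' = U r0 j" by (simp add: z'_def)
          fix j'' assume "j \<le> j''" "j'' < pt lam' r0"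
          then show "z' < V' r0 j''"
            using Uj right[of j''] ptr0 Vr0 unfolding z'_def V'_def by (cases "j'' = j") auto
        qed
      qed
      have cb: "canb V' lam' z' r0" unfolding canb_def
        using jl ptr0 Uj by (auto simp: V'_def z'_def intro!: exI[of _ j])
      have bp: "bpos V' lam' z' r0 = j"
      proof -
        have "bpos V' lam' z' r0 \<le> j" by (rule bpos_le) (use jl ptr0 Uj in \<open>auto simp: V'_def z'_def\<close>)
        moreover have "\<not> bpos V' lam' z' r0 < j"
        proof
          assume b: "bpos V' lam' z' r0 < j"
          have "z' < V' r0 (bpos V' lam' z' r0)" using bpos(2)[OF cb] .
          moreover have "V' r0 (bpos V' lam' z' r0) = U r0 (bpos V' lam' z' r0)"
            using b Vr0 by (simp add: V'_def)
          moreover have "U r0 (bpos V' lam' z' r0) \<le> U r0 j"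
            using ssyt_row_mono[OF U, of _ j r0] b jl by simp
          ultimately show False unfolding z'_def by simp
        qed
        ultimately show ?thesis by simp
      qed
      have bk: "V'(r0 := (V' r0)(j := z')) = V"
        using Vr0 unfolding V'_def z'_def by (auto simp: fun_eq_iff)
      have eqi: "insr V' lam' z' r0 = insr V lam' z (Suc r0)"
        using insr_bump[OF cb] unfolding bp bk by (simp add: V'_def)
      obtain U' x where "U' \<in> ssyt n lam'" "x < n" "insr U' lam' x 0 = insr V' lam' z' r0"
        using Suc.IH r0R inv' by fastforce
      then show "\<exists>U' x. U' \<in> ssyt n lam' \<and> x < n \<and> insr U' lam' x 0 = insr V lam' z (Suc r0)"
        using eqi by auto
    qed
  qed
  define V0 where "V0 = U(R := (U R)(c := 0))"
  define z0 where "z0 = U R c"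
  have V0s: "V0 \<in> ssyt n lam'"
    unfolding ssyt_iff
  proof (intro conjI allI impI)
    fix i j assume a: "pt lam' i \<le> j"
    show "V0 i j = 0"
    proof (cases "i = R")
      case True then show ?thesis using a Us cl by (cases "j = c") (auto simp: V0_def c_def)
    next
      case False then show ?thesis using a Us ptl' by (auto simp: V0_def)
    qed
  next
    fix i j assume "j < pt lam' i" then show "V0 i j < n" using Us ptl'[of i] by (auto simp: V0_def c_def split: if_splits)
  next
    fix i j assume a: "Suc j < pt lam' i"
    then show "V0 i j \<le> V0 i (Suc j)" using Us ptl'[of i] cl by (auto simp: V0_def split: if_splits)
  next
    fix i j assume a: "j < pt lam' (Suc i)"
    have "pt lam' (Suc i) \<le> pt lam (Suc i)" by (simp add: ptl')
    moreover have "j \<noteq> c" if "i = R"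
      using a that cor by (simp add: ptl' c_def)
    ultimately show "V0 i j < V0 (Suc i) j" using Us a cl ptl'[of "Suc i"]
      by (auto simp: V0_def split: if_splits)
  qed
  have inv0: "Inv V0 z0 R"
    unfolding Inv_def
  proof (intro conjI)
    show "V0 \<in> ssyt n lam'" by (rule V0s)
    show "z0 < n" using Us cl unfolding z0_def by auto
    show "\<forall>i<R. V0 i = U i" by (simp add: V0_def)
    show "\<exists>q<pt lam R. z0 = U R q \<and> (\<forall>j. q \<le> j \<longrightarrow> j < pt lam' R \<longrightarrow> z0 < V0 R j)"
      using cl by (intro exI[of _ c]) (auto simp: z0_def)
  qed
  have ncb: "\<not> canb V0 lam' z0 R"
    unfolding canb_def
  proof
    assume "\<exists>j<pt lam' R. z0 < V0 R j"
    then obtain j where j: "j < c" "z0 < V0 R j" using cl by auto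
    have "U R j \<le> U R c" using ssyt_row_mono[OF U, of j c R] j cl by simp
    then show False using j unfolding z0_def V0_def by simp
  qed
  have "insr V0 lam' z0 R = (V0(R := (V0 R)(pt lam' R := z0)), addbox lam' R, R)"
    by (rule insr_app[OF ncb])
  also have "V0(R := (V0 R)(pt lam' R := z0)) = U"
    using cl unfolding V0_def z0_def by (auto simp: fun_eq_iff)
  also have "addbox lam' R = lam" unfolding lam'_def by (rule addbox_rembox)
  finally have fin: "insr V0 lam' z0 R = (U, lam, R)" .
  show ?thesis using main[of R] inv0 fin unfolding lam'_def by fastforce
qed

definition VS :: "nat list \<Rightarrow> nat \<Rightarrow> nat list \<Rightarrow> bool" where
  "VS mu k lam \<longleftrightarrow> is_partition lam \<and> (\<forall>i. pt mu i \<le> pt lam i \<and> pt lam i \<le> Suc (pt mu i)) \<and>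
     sum_list lam = sum_list mu + k"

definition shiftC :: "(nat \<Rightarrow> nat \<Rightarrow> nat) \<Rightarrow> nat \<Rightarrow> nat \<Rightarrow> nat" where
  "shiftC C = (\<lambda>i j. C (Suc i) j)"

fun phi :: "nat \<Rightarrow> (nat \<Rightarrow> nat \<Rightarrow> nat) \<Rightarrow> nat list \<Rightarrow> (nat \<Rightarrow> nat \<Rightarrow> nat) \<Rightarrow> (nat \<Rightarrow> nat \<Rightarrow> nat) \<times> nat list \<times> nat" where
  "phi 0 T mu C = (T, mu, 0)"
| "phi (Suc k) T mu C = (case phi k T mu (shiftC C) of (U, lam, R) \<Rightarrow> insr U lam (C 0 0) 0)"

lemma pt_rep: "pt (replicate k (1::nat)) i = (if i < k then 1 else 0)"
  by (simp add: pt_def)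

lemma partition_rep: "is_partition (replicate k (1::nat))"
  by (auto simp: is_partition_def sorted_wrt_iff_nth_less)

lemma ssyt_rep:
  "C \<in> ssyt n (replicate k 1) \<longleftrightarrow> (\<forall>i j. (0 < j \<or> k \<le> i) \<longrightarrow> C i j = 0) \<and> (\<forall>i<k. C i 0 < n) \<and>
     (\<forall>i. Suc i < k \<longrightarrow> C i 0 < C (Suc i) 0)"
  unfolding ssyt_iff pt_rep by (auto simp: not_less)

lemma shiftC_ssyt: "C \<in> ssyt n (replicate (Suc k) 1) \<Longrightarrow> shiftC C \<in> ssyt n (replicate k 1)"
  unfolding ssyt_rep shiftC_def by auto

lemma tab_exp_rep: "tab_exp (replicate k 1) C = (\<Sum>i<k. Poly_Mapping.single (C i 0) 1)"
proof -
  have "cells (replicate k 1) = (\<lambda>i. (i, 0)) ` {..<k}" by (auto simp: cells_def)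
  then show ?thesis unfolding tab_exp_def by (simp add: sum.reindex inj_on_def)
qed

lemma tab_exp_rep_Suc: "tab_exp (replicate (Suc k) 1) C = Poly_Mapping.single (C 0 0) 1 + tab_exp (replicate k 1) (shiftC C)"
  unfolding tab_exp_rep shiftC_def by (subst sum.lessThan_Suc_shift) simp

lemma VS_bounds: "VS mu k lam \<Longrightarrow> pt lam i = pt mu i \<or> pt lam i = Suc (pt mu i)"
  unfolding VS_def by (metis le_SucE le_antisym)

lemma phi_props:
  assumes "T \<in> ssyt n mu" "is_partition mu" "C \<in> ssyt n (replicate k 1)" "phi k T mu C = (U, lam, R)"
  shows "U \<in> ssyt n lam \<and> VS mu k lam \<and> tab_exp lam U = tab_exp mu T + tab_exp (replicate k 1) C \<and>
    (0 < k \<longrightarrow> pt lam R = Suc (pt mu R) \<and> (\<forall>i>R. pt lam i = pt mu i) \<and>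
       (\<exists>V nu. V \<in> ssyt n nu \<and> insr V nu (C 0 0) 0 = (U, lam, R)))"
  using assms(3,4)
proof (induction k arbitrary: C U lam R)
  case 0
  then show ?case using assms(1,2) by (auto simp: VS_def tab_exp_def cells_def)
next
  case (Suc k)
  obtain U' lam' R' where e': "phi k T mu (shiftC C) = (U', lam', R')" by (cases "phi k T mu (shiftC C)") auto
  have IH: "U' \<in> ssyt n lam' \<and> VS mu k lam' \<and> tab_exp lam' U' = tab_exp mu T + tab_exp (replicate k 1) (shiftC C) \<and>
    (0 < k \<longrightarrow> pt lam' R' = Suc (pt mu R') \<and> (\<forall>i>R'. pt lam' i = pt mu i) \<and>
       (\<exists>V nu. V \<in> ssyt n nu \<and> insr V nu (shiftC C 0 0) 0 = (U', lam', R')))"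
    by (rule Suc.IH[OF shiftC_ssyt[OF Suc.prems(1)] e'])
  have e: "insr U' lam' (C 0 0) 0 = (U, lam, R)" using Suc.prems(2) e' by simp
  have xn: "C 0 0 < n" using Suc.prems(1) unfolding ssyt_rep by auto
  have pl': "is_partition lam'" using IH by (simp add: VS_def)
  have I1: "U \<in> ssyt n lam \<and> is_partition lam \<and> tab_exp lam U = tab_exp lam' U' + Poly_Mapping.single (C 0 0) 1"
    by (rule insr_ssyt[OF e]) (use IH pl' xn in auto)
  have B: "R \<le> length lam' \<and> lam = addbox lam' R"
    using insr_basic[OF e] by simp
  have ptl: "\<And>i. pt lam i = pt lam' i + (if i = R then 1 else 0)" using B by (simp add: pt_addbox)
  have RR: "\<forall>i\<ge>R. pt lam' i = pt mu i"
  proof (cases "k = 0")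
    case True then show ?thesis using e' by simp
  next
    case False
    then obtain V nu where V: "insr V nu (shiftC C 0 0) 0 = (U', lam', R')"
      and b: "pt lam' R' = Suc (pt mu R')" "\<forall>i>R'. pt lam' i = pt mu i" using IH by auto
    have "C 0 0 < shiftC C 0 0" using Suc.prems(1) False unfolding ssyt_rep shiftC_def by auto
    then have "R' < snd (snd (insr U' lam' (C 0 0) 0))"
      by (intro insr_strict[OF V]) auto
    then have "R' < R" using e by simp
    then show ?thesis using b by auto
  qed
  have VS: "VS mu (Suc k) lam"
    unfolding VS_def
  proof (intro conjI allI)
    show "is_partition lam" using I1 by simp
    fix i show "pt mu i \<le> pt lam i" "pt lam i \<le> Suc (pt mu i)"
      using IH RR[rule_format, of i] ptl[of i] by (auto simp: VS_def)
  next
    show "sum_list lam = sum_list mu + Suc k"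
      using sum_list_addbox[of R lam'] B IH by (simp add: VS_def)
  qed
  show ?case
  proof (intro conjI impI)
    show "U \<in> ssyt n lam" using I1 by simp
    show "VS mu (Suc k) lam" by (rule VS)
    show "tab_exp lam U = tab_exp mu T + tab_exp (replicate (Suc k) 1) C"
      using I1 IH tab_exp_rep_Suc[of k C] by (simp add: ac_simps del: replicate_Suc)
    show "pt lam R = Suc (pt mu R)" using ptl[of R] RR by simp
    show "\<forall>i>R. pt lam i = pt mu i" using ptl RR by simp
    show "\<exists>V nu. V \<in> ssyt n nu \<and> insr V nu (C 0 0) 0 = (U, lam, R)" using IH e by blast
  qed
qed

lemma VS_zero: "is_partition mu \<Longrightarrow> VS mu 0 lam \<Longrightarrow> lam = mu"
proof -
  assume pm: "is_partition mu" and v: "VS mu 0 lam"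
  let ?L = "max (length mu) (length lam)"
  have eq: "(\<Sum>i<?L. pt mu i) = (\<Sum>i<?L. pt lam i)"
    using v sum_list_pt[of lam ?L] sum_list_pt[of mu ?L] by (simp add: VS_def)
  have "pt mu i = pt lam i" for i
  proof (cases "i < ?L")
    case True
    show ?thesis by (rule sum_mono_inv[OF eq]) (use v True in \<open>auto simp: VS_def\<close>)
  next
    case False then show ?thesis by (auto simp: pt_def)
  qed
  then show "lam = mu" using v pm by (intro partition_eqI) (auto simp: VS_def)
qed

lemma VS_bottom:
  assumes pm: "is_partition mu" and v: "VS mu (Suc k) lam"
  shows "\<exists>R. pt lam R = Suc (pt mu R) \<and> (\<forall>i>R. pt lam i = pt mu i)"
proof -
  define D where "D = {i. pt lam i \<noteq> pt mu i}"
  have fD: "finite D"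
    by (rule finite_subset[of _ "{..<max (length mu) (length lam)}"]) (auto simp: D_def pt_def)
  have "D \<noteq> {}"
  proof
    assume "D = {}"
    then have "lam = mu" using pm v by (intro partition_eqI) (auto simp: D_def VS_def)
    then show False using v by (simp add: VS_def)
  qed
  define R where "R = Max D"
  have "R \<in> D" unfolding R_def using fD \<open>D \<noteq> {}\<close> by simp
  moreover have "\<forall>i>R. pt lam i = pt mu i" unfolding R_def using fD by (auto simp: D_def dest: Max_ge)
  ultimately show ?thesis using VS_bounds[OF v, of R] unfolding D_def by auto
qed

lemma VS_rembox:
  assumes pm: "is_partition mu" and v: "VS mu (Suc k) lam"
    and R: "pt lam R = Suc (pt mu R)" "\<forall>i>R. pt lam i = pt mu i"
  shows "corner lam R" "VS mu k (rembox lam R)"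
proof -
  have pl: "is_partition lam" using v by (simp add: VS_def)
  show c: "corner lam R"
  proof
    show "is_partition lam" by (rule pl)
    show "0 < pt lam R" using R by simp
    show "pt lam (Suc R) < pt lam R" using R part_mono[OF pm, of R "Suc R"] by simp
  qed
  interpret corner lam R by (rule c)
  have s: "sum_list lam = Suc (sum_list (rembox lam R))"
    using sum_list_addbox[OF length_rembox] addbox_rembox by simp
  show "VS mu k (rembox lam R)"
    unfolding VS_def
  proof (intro conjI allI)
    show "is_partition (rembox lam R)" by (rule partition_rembox)
    fix i show "pt mu i \<le> pt (rembox lam R) i" "pt (rembox lam R) i \<le> Suc (pt mu i)"
      using v R by (auto simp: pt_rembox VS_def)
  next
    show "sum_list (rembox lam R) = sum_list mu + k" using s v by (simp add: VS_def)
  qed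
qed

lemma phi_surj:
  assumes pm: "is_partition mu" and "VS mu k lam" "U \<in> ssyt n lam"
  shows "\<exists>T C R. T \<in> ssyt n mu \<and> C \<in> ssyt n (replicate k 1) \<and> phi k T mu C = (U, lam, R)"
  using assms(2,3)
proof (induction k arbitrary: lam U)
  case 0
  then have "lam = mu" using VS_zero[OF pm] by simp
  moreover have "(\<lambda>_ _. 0) \<in> ssyt n (replicate 0 1)" unfolding ssyt_rep by simp
  ultimately show ?case using 0 by fastforce
next
  case (Suc k)
  obtain R where R: "pt lam R = Suc (pt mu R)" "\<forall>i>R. pt lam i = pt mu i"
    using VS_bottom[OF pm Suc.prems(1)] by blast
  note cv = VS_rembox[OF pm Suc.prems(1) R]
  define lam' where "lam' = rembox lam R"
  obtain U' x where U': "U' \<in> ssyt n lam'" "x < n" "insr U' lam' x 0 = (U, lam, R)"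
    using unbump[OF Suc.prems(2) cv(1)] unfolding lam'_def by blast
  obtain T C' R' where TC: "T \<in> ssyt n mu" "C' \<in> ssyt n (replicate k 1)" "phi k T mu C' = (U', lam', R')"
    using Suc.IH[OF cv(2)[folded lam'_def] U'(1)] by blast
  have ptl': "\<forall>i\<ge>R. pt lam' i = pt mu i"
    using R unfolding lam'_def by (auto simp: corner.pt_rembox[OF cv(1)])
  have xl: "x < C' 0 0" if "0 < k"
  proof (rule ccontr)
    assume "\<not> x < C' 0 0"
    then have le: "C' 0 0 \<le> x" by simp
    have P: "pt lam' R' = Suc (pt mu R') \<and> (\<exists>V nu. V \<in> ssyt n nu \<and> insr V nu (C' 0 0) 0 = (U', lam', R'))"
      using phi_props[OF TC(1) pm TC(2,3)] that by blast
    then obtain V nu where V: "V \<in> ssyt n nu" "insr V nu (C' 0 0) 0 = (U', lam', R')" by blast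
    have "snd (snd (insr U' lam' x 0)) \<le> R'"
      by (rule insr_weak[OF V(2) le]) (use ssyt_row_mono[OF V(1)] in auto)
    then have "R \<le> R'" using U'(3) by simp
    then show False using ptl' P by auto
  qed
  define C where "C = (\<lambda>i (j::nat). if j = 0 then (case i of 0 \<Rightarrow> x | Suc i' \<Rightarrow> C' i' 0) else 0)"
  have sh: "shiftC C = C'"
    using TC(2) unfolding ssyt_rep by (auto simp: C_def shiftC_def fun_eq_iff)
  have Cs: "C \<in> ssyt n (replicate (Suc k) 1)"
    unfolding ssyt_rep
  proof (intro conjI allI impI)
    fix i and j :: nat assume "0 < j \<or> Suc k \<le> i"
    then show "C i j = 0" using TC(2) unfolding ssyt_rep by (auto simp: C_def split: nat.splits)
  next
    fix i assume "i < Suc k" then show "C i 0 < n" using TC(2) U'(2) unfolding ssyt_rep by (auto simp: C_def split: nat.splits)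
  next
    fix i assume "Suc i < Suc k" then show "C i 0 < C (Suc i) 0"
      using TC(2) xl unfolding ssyt_rep by (auto simp: C_def split: nat.splits)
  qed
  have "phi (Suc k) T mu C = (U, lam, R)" using TC(3) sh U'(3) by (simp add: C_def)
  then show ?case using TC(1) Cs by blast
qed

lemma phi_inj:
  assumes "T1 \<in> ssyt n mu" "T2 \<in> ssyt n mu" "is_partition mu"
    "C1 \<in> ssyt n (replicate k 1)" "C2 \<in> ssyt n (replicate k 1)"
    "phi k T1 mu C1 = (U, lam, R1)" "phi k T2 mu C2 = (U, lam, R2)"
  shows "T1 = T2 \<and> C1 = C2"
  using assms(4-7)
proof (induction k arbitrary: C1 C2 U lam R1 R2)
  case 0
  then show ?case unfolding ssyt_rep by (auto simp: fun_eq_iff)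
next
  case (Suc k)
  obtain U1 lam1 R1' where e1: "phi k T1 mu (shiftC C1) = (U1, lam1, R1')" by (cases "phi k T1 mu (shiftC C1)") auto
  obtain U2 lam2 R2' where e2: "phi k T2 mu (shiftC C2) = (U2, lam2, R2')" by (cases "phi k T2 mu (shiftC C2)") auto
  have i1: "insr U1 lam1 (C1 0 0) 0 = (U, lam, R1)" using Suc.prems(3) e1 by simp
  have i2: "insr U2 lam2 (C2 0 0) 0 = (U, lam, R2)" using Suc.prems(4) e2 by simp
  have P1: "pt lam R1 = Suc (pt mu R1) \<and> (\<forall>i>R1. pt lam i = pt mu i)"
    using phi_props[OF assms(1,3) Suc.prems(1,3)] by simp
  have P2: "pt lam R2 = Suc (pt mu R2) \<and> (\<forall>i>R2. pt lam i = pt mu i)"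
    using phi_props[OF assms(2,3) Suc.prems(2,4)] by simp
  have RR: "R1 = R2"
  proof (rule ccontr)
    assume "R1 \<noteq> R2"
    then consider "R1 < R2" | "R2 < R1" by linarith
    then show False by cases (use P1 P2 in auto)
  qed
  have Q1: "U1 \<in> ssyt n lam1 \<and> VS mu k lam1" using phi_props[OF assms(1,3) shiftC_ssyt[OF Suc.prems(1)] e1] by simp
  have Q2: "U2 \<in> ssyt n lam2 \<and> VS mu k lam2" using phi_props[OF assms(2,3) shiftC_ssyt[OF Suc.prems(2)] e2] by simp
  have b1: "R1 \<le> length lam1 \<and> lam = addbox lam1 R1" using insr_basic[OF i1] by simp
  have b2: "R2 \<le> length lam2 \<and> lam = addbox lam2 R2" using insr_basic[OF i2] by simp
  have "lam1 = lam2"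
  proof (rule partition_eqI)
    show "is_partition lam1" "is_partition lam2" using Q1 Q2 by (auto simp: VS_def)
    fix i
    have "pt lam i = pt lam1 i + (if i = R1 then 1 else 0)" using b1 by (simp add: pt_addbox)
    moreover have "pt lam i = pt lam2 i + (if i = R2 then 1 else 0)" using b2 by (simp add: pt_addbox)
    ultimately show "pt lam1 i = pt lam2 i" using RR by simp
  qed
  then have "U1 = U2 \<and> C1 0 0 = C2 0 0"
    using i1 i2 RR Q1 Q2
    by (intro insr_inj[of U1 lam1 "C1 0 0" 0 U2 "C2 0 0"])
       (auto simp: ssyt_iff intro: ssyt_row_mono)
  then have IH: "T1 = T2 \<and> shiftC C1 = shiftC C2"
    using Suc.IH[OF shiftC_ssyt[OF Suc.prems(1)] shiftC_ssyt[OF Suc.prems(2)] e1] e2 \<open>lam1 = lam2\<close> by simp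
  have "C1 = C2"
  proof (intro ext)
    fix i j show "C1 i j = C2 i j"
    proof (cases "j = 0")
      case False then show ?thesis using Suc.prems(1,2) unfolding ssyt_rep by auto
    next
      case True
      show ?thesis
      proof (cases i)
        case 0 then show ?thesis using True \<open>U1 = U2 \<and> C1 0 0 = C2 0 0\<close> by simp
      next
        case (Suc i')
        have "shiftC C1 i' 0 = shiftC C2 i' 0" using IH by simp
        then show ?thesis using True Suc by (simp add: shiftC_def)
      qed
    qed
  qed
  then show ?case using IH by simp
qed

lemma finite_ssyt: "finite (ssyt n lam)"
proof -
  let ?f = "\<lambda>T::nat\<Rightarrow>nat\<Rightarrow>nat. restrict (\<lambda>(i, j). T i j) (cells lam)"
  have inj: "inj_on ?f (ssyt n lam)"
  proof (rule inj_onI)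
    fix T1 T2 assume T: "T1 \<in> ssyt n lam" "T2 \<in> ssyt n lam" and e: "?f T1 = ?f T2"
    show "T1 = T2"
    proof (intro ext)
      fix i j show "T1 i j = T2 i j"
      proof (cases "(i, j) \<in> cells lam")
        case True
        have "restrict (\<lambda>(i, j). T1 i j) (cells lam) (i, j) = restrict (\<lambda>(i, j). T2 i j) (cells lam) (i, j)"
          using e by simp
        then show ?thesis using True by simp
      next
        case False then show ?thesis using T unfolding ssyt_def by auto
      qed
    qed
  qed
  have "?f ` ssyt n lam \<subseteq> PiE (cells lam) (\<lambda>_. {..<n})"
    by (auto simp: ssyt_def)
  then have "finite (?f ` ssyt n lam)" by (rule finite_subset) (simp add: finite_PiE finite_cells)
  then show ?thesis using finite_imageD[OF _ inj] by blast
qed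

lemma length_le_sum_list: "\<forall>x\<in>set xs. (0::nat) < x \<Longrightarrow> length xs \<le> sum_list xs"
  by (induction xs) auto

lemma finite_VS: "finite {lam. VS mu k lam}"
proof -
  let ?B = "sum_list mu + k"
  have "{lam. VS mu k lam} \<subseteq> {xs. set xs \<subseteq> {..?B} \<and> length xs \<le> ?B}"
  proof safe
    fix lam x assume v: "VS mu k lam" "x \<in> set lam"
    then show "x \<le> ?B" using member_le_sum_list[of x lam] by (simp add: VS_def)
  next
    fix lam assume v: "VS mu k lam"
    then show "length lam \<le> ?B" using length_le_sum_list[of lam] by (simp add: VS_def is_partition_def)
  qed
  then show ?thesis by (rule finite_subset) (rule finite_lists_length_le, simp)
qed

lemma schur_def2: "schur n lam = (\<Sum>T\<in>ssyt n lam. Poly_Mapping.single (tab_exp lam T) 1)"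
  by (simp add: schur_def)

lemma pieri:
  assumes pm: "is_partition mu"
  shows "schur n mu * schur n (replicate k 1) = (\<Sum>lam\<in>{lam. VS mu k lam}. schur n lam)"
proof -
  let ?A = "ssyt n mu \<times> ssyt n (replicate k 1)"
  let ?B = "Sigma {lam. VS mu k lam} (\<lambda>lam. ssyt n lam)"
  let ?h = "\<lambda>(T, C). (fst (snd (phi k T mu C)), fst (phi k T mu C))"
  have bij: "bij_betw ?h ?A ?B"
    unfolding bij_betw_def
  proof (intro conjI)
    show "inj_on ?h ?A"
    proof (rule inj_onI)
      fix x y assume xy: "x \<in> ?A" "y \<in> ?A" "?h x = ?h y"
      obtain T1 C1 where x: "x = (T1, C1)" by (cases x) auto
      obtain T2 C2 where y: "y = (T2, C2)" by (cases y) auto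
      have a: "T1 \<in> ssyt n mu" "C1 \<in> ssyt n (replicate k 1)"
        "T2 \<in> ssyt n mu" "C2 \<in> ssyt n (replicate k 1)" using xy x y by auto
      obtain U1 lam1 R1 where e1: "phi k T1 mu C1 = (U1, lam1, R1)" by (cases "phi k T1 mu C1") auto
      obtain U2 lam2 R2 where e2: "phi k T2 mu C2 = (U2, lam2, R2)" by (cases "phi k T2 mu C2") auto
      have "phi k T2 mu C2 = (U1, lam1, R2)" using xy(3) x y e1 e2 by simp
      then show "x = y" unfolding x y using phi_inj[OF a(1,3) pm a(2,4) e1] by simp
    qed
  next
    show "?h ` ?A = ?B"
    proof
      show "?h ` ?A \<subseteq> ?B"
      proof
        fix z assume "z \<in> ?h ` ?A"
        then obtain T C where a: "T \<in> ssyt n mu" "C \<in> ssyt n (replicate k 1)" and z: "z = ?h (T, C)" by auto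
        obtain U lam R where e: "phi k T mu C = (U, lam, R)" by (cases "phi k T mu C") auto
        show "z \<in> ?B" using phi_props[OF a(1) pm a(2) e] e z by simp
      qed
    next
      show "?B \<subseteq> ?h ` ?A"
      proof
        fix z assume "z \<in> ?B"
        then obtain lam U where a: "VS mu k lam" "U \<in> ssyt n lam" and z: "z = (lam, U)" by auto
        obtain T C R where "T \<in> ssyt n mu" "C \<in> ssyt n (replicate k 1)" "phi k T mu C = (U, lam, R)"
          using phi_surj[OF pm a] by blast
        then show "z \<in> ?h ` ?A" unfolding z by (intro image_eqI[of _ _ "(T, C)"]) auto
      qed
    qed
  qed
  have "schur n mu * schur n (replicate k 1) =
      (\<Sum>T\<in>ssyt n mu. \<Sum>C\<in>ssyt n (replicate k 1). Poly_Mapping.single (tab_exp mu T + tab_exp (replicate k 1) C) 1)"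
    unfolding schur_def sum_product by (simp add: mult_single)
  also have "\<dots> = (\<Sum>(T, C)\<in>?A. Poly_Mapping.single (tab_exp mu T + tab_exp (replicate k 1) C) 1)"
    by (rule sum.cartesian_product)
  also have "\<dots> =
      (\<Sum>x\<in>?A. (case ?h x of (lam, U) \<Rightarrow> Poly_Mapping.single (tab_exp lam U) 1))"
  proof (rule sum.cong[OF refl])
    fix x assume "x \<in> ?A"
    then obtain T C where a: "T \<in> ssyt n mu" "C \<in> ssyt n (replicate k 1)" and x: "x = (T, C)" by auto
    obtain U lam R where e: "phi k T mu C = (U, lam, R)" by (cases "phi k T mu C") auto
    show "(case x of (T, C) \<Rightarrow> Poly_Mapping.single (tab_exp mu T + tab_exp (replicate k 1) C) 1) =
      (case ?h x of (lam, U) \<Rightarrow> Poly_Mapping.single (tab_exp lam U) 1)"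
      using phi_props[OF a(1) pm a(2) e] e x by simp
  qed
  also have "\<dots> = (\<Sum>(lam, U)\<in>?B. Poly_Mapping.single (tab_exp lam U) 1)"
    by (rule sum.reindex_bij_betw[OF bij])
  also have "\<dots> = (\<Sum>lam\<in>{lam. VS mu k lam}. \<Sum>U\<in>ssyt n lam. Poly_Mapping.single (tab_exp lam U) 1)"
    by (rule sum.Sigma[symmetric]) (auto simp: finite_VS finite_ssyt)
  also have "\<dots> = (\<Sum>lam\<in>{lam. VS mu k lam}. schur n lam)" by (simp add: schur_def)
  finally show ?thesis .
qed

lemma lookup_ofint_mult: "Poly_Mapping.lookup (of_int c * (p :: ipoly)) k = c * Poly_Mapping.lookup p k"
proof -
  have "(of_int c :: ipoly) = Poly_Mapping.single 0 c" by (metis single_of_int id_apply of_int_eq_id)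
  then have "of_int c * p = Poly_Mapping.single 0 c * p" by simp
  also have "\<dots> = Poly_Mapping.map ((*) c) p" by (rule mult_map_scale_conv_mult[symmetric])
  finally show ?thesis by (simp add: map.rep_eq when_def)
qed

lemma lookup_tab_exp:
  "Poly_Mapping.lookup (tab_exp lam T) v = (\<Sum>c\<in>cells lam. if T (fst c) (snd c) = v then (1::nat) else 0)"
  unfolding tab_exp_def Poly_Mapping.lookup_sum
  by (intro sum.cong refl) (auto simp: lookup_single when_def split: prod.splits)

lemma dominance:
  assumes T: "T \<in> ssyt n lam" and pl: "is_partition lam"
  shows "(\<Sum>v<k. Poly_Mapping.lookup (tab_exp lam T) v) \<le> (\<Sum>i<k. pt lam i)"
proof -
  have "(\<Sum>v<k. Poly_Mapping.lookup (tab_exp lam T) v) = (\<Sum>c\<in>cells lam. \<Sum>v<k. if T (fst c) (snd c) = v then 1 else 0)"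
    unfolding lookup_tab_exp by (rule sum.swap)
  also have "\<dots> = (\<Sum>c\<in>cells lam. if T (fst c) (snd c) < k then 1 else 0)"
    by (intro sum.cong refl) (simp add: sum.delta' [of "{..<k}"])
  also have "\<dots> \<le> (\<Sum>c\<in>cells lam. if fst c < k then 1 else 0)"
  proof (rule sum_mono)
    fix c assume "c \<in> cells lam"
    then have "fst c \<le> T (fst c) (snd c)" using ssyt_ge_row[OF T pl] by (cases c) (auto simp: cells_pt)
    then show "(if T (fst c) (snd c) < k then 1 else 0) \<le> (if fst c < k then 1 else (0::nat))" by auto
  qed
  also have "\<dots> = card {c \<in> cells lam. fst c < k}"
    by (simp add: sum.inter_filter[symmetric] finite_cells)
  also have "{c \<in> cells lam. fst c < k} = Sigma {..<k} (\<lambda>i. {..<pt lam i})"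
    by (auto simp: cells_pt)
  also have "card \<dots> = (\<Sum>i<k. pt lam i)" by simp
  finally show ?thesis .
qed

definition T0 :: "nat list \<Rightarrow> nat \<Rightarrow> nat \<Rightarrow> nat" where
  "T0 lam = (\<lambda>i j. if j < pt lam i then i else 0)"

lemma T0_ssyt:
  assumes pl: "is_partition lam" and ln: "length lam \<le> n"
  shows "T0 lam \<in> ssyt n lam"
  unfolding ssyt_iff T0_def
proof (intro conjI allI impI)
  fix i j assume "j < pt lam i"
  then have "i < length lam" using part_pos[OF pl, of i] by simp
  then show "(if j < pt lam i then i else 0) < n" using ln by simp
next
  fix i j assume "j < pt lam (Suc i)"
  moreover have "pt lam (Suc i) \<le> pt lam i" by (rule part_mono[OF pl]) simp
  ultimately show "(if j < pt lam i then i else 0) < (if j < pt lam (Suc i) then Suc i else 0)" by simp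
qed auto

lemma lookup_T0: "Poly_Mapping.lookup (tab_exp lam (T0 lam)) v = pt lam v"
proof -
  have "Poly_Mapping.lookup (tab_exp lam (T0 lam)) v = card {c \<in> cells lam. T0 lam (fst c) (snd c) = v}"
    unfolding lookup_tab_exp by (simp add: sum.inter_filter[symmetric] finite_cells)
  also have "{c \<in> cells lam. T0 lam (fst c) (snd c) = v} = {v} \<times> {..<pt lam v}"
    by (auto simp: cells_pt T0_def)
  finally show ?thesis by simp
qed


definition ps :: "nat list \<Rightarrow> nat \<Rightarrow> nat" where "ps lam k = (\<Sum>i<k. pt lam i)"
definition phiv :: "nat \<Rightarrow> nat list \<Rightarrow> nat" where "phiv n lam = (\<Sum>k\<le>n. ps lam k)"

lemma lookup_schur:
  "Poly_Mapping.lookup (schur n lam) e = int (card {T \<in> ssyt n lam. tab_exp lam T = e})"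
proof -
  have "Poly_Mapping.lookup (schur n lam) e = (\<Sum>T\<in>ssyt n lam. if tab_exp lam T = e then 1 else 0)"
    unfolding schur_def Poly_Mapping.lookup_sum by (intro sum.cong refl) (auto simp: lookup_single when_def)
  also have "\<dots> = int (card {T \<in> ssyt n lam. tab_exp lam T = e})"
    by (simp add: sum.inter_filter[symmetric] finite_ssyt)
  finally show ?thesis .
qed

lemma coeff_dom:
  assumes "is_partition lam" "T \<in> ssyt n lam" "tab_exp lam T = tab_exp mu (T0 mu)"
  shows "ps mu k \<le> ps lam k"
proof -
  have "ps mu k = (\<Sum>v<k. Poly_Mapping.lookup (tab_exp mu (T0 mu)) v)" by (simp add: ps_def lookup_T0)
  also have "\<dots> = (\<Sum>v<k. Poly_Mapping.lookup (tab_exp lam T) v)" using assms(3) by simp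
  also have "\<dots> \<le> ps lam k" unfolding ps_def by (rule dominance[OF assms(2,1)])
  finally show ?thesis .
qed

lemma ps_inj:
  assumes "is_partition a" "is_partition b" "length a \<le> n" "length b \<le> n" "\<forall>k\<le>n. ps a k = ps b k"
  shows "a = b"
proof (rule partition_eqI[OF assms(1,2)])
  fix i show "pt a i = pt b i"
  proof (cases "i < n")
    case True
    have "ps a (Suc i) = ps b (Suc i)" "ps a i = ps b i" using assms(5) True by auto
    then show ?thesis by (simp add: ps_def)
  next
    case False then show ?thesis using assms(3,4) by (simp add: pt_def)
  qed
qed

lemma phiv_strict:
  assumes "is_partition a" "is_partition b" "length a \<le> n" "length b \<le> n" "\<forall>k. ps a k \<le> ps b k" "a \<noteq> b"
  shows "phiv n a < phiv n b"
proof -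
  obtain k where "k \<le> n" "ps a k \<noteq> ps b k" using ps_inj[OF assms(1-4)] assms(6) by blast
  then have "\<exists>k\<in>{..n}. ps a k < ps b k" using assms(5)[rule_format, of k] by (intro bexI[of _ k]) auto
  then show ?thesis unfolding phiv_def using assms(5) by (intro sum_strict_mono_ex1) auto
qed

lemma schur_indep:
  assumes fin: "finite F" and parts: "\<forall>lam\<in>F. is_partition lam \<and> length lam \<le> n"
    and z: "(\<Sum>lam\<in>F. of_int (c lam) * schur n lam) = 0"
  shows "\<forall>lam\<in>F. c lam = 0"
proof (rule ccontr)
  assume "\<not> (\<forall>lam\<in>F. c lam = 0)"
  define G where "G = {lam \<in> F. c lam \<noteq> 0}"
  have fG: "finite G" and nG: "G \<noteq> {}" using fin \<open>\<not> _\<close> by (auto simp: G_def)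
  have "Max (phiv n ` G) \<in> phiv n ` G" using fG nG by simp
  then obtain lam0 where l0: "lam0 \<in> G" "phiv n lam0 = Max (phiv n ` G)" by auto
  have max: "\<And>lam. lam \<in> G \<Longrightarrow> phiv n lam \<le> phiv n lam0" using l0 fG by simp
  define e0 where "e0 = tab_exp lam0 (T0 lam0)"
  have p0: "is_partition lam0" "length lam0 \<le> n" using l0 parts by (auto simp: G_def)
  have zero: "c lam * Poly_Mapping.lookup (schur n lam) e0 = 0" if "lam \<in> F" "lam \<noteq> lam0" for lam
  proof (cases "c lam = 0")
    case False
    then have lG: "lam \<in> G" using that by (simp add: G_def)
    have pl: "is_partition lam" "length lam \<le> n" using that parts by auto
    have "{T \<in> ssyt n lam. tab_exp lam T = e0} = {}"
    proof (rule ccontr)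
      assume "{T \<in> ssyt n lam. tab_exp lam T = e0} \<noteq> {}"
      then obtain T where T: "T \<in> ssyt n lam" "tab_exp lam T = e0" by auto
      have "\<forall>k. ps lam0 k \<le> ps lam k" using coeff_dom[OF pl(1) T(1)] T(2) unfolding e0_def by blast
      then have "phiv n lam0 < phiv n lam" using phiv_strict[OF p0(1) pl(1) p0(2) pl(2)] that(2) by metis
      then show False using max[OF lG] by simp
    qed
    then show ?thesis unfolding lookup_schur by (simp only:) simp
  qed simp
  have "0 = Poly_Mapping.lookup (\<Sum>lam\<in>F. of_int (c lam) * schur n lam) e0" using z by simp
  also have "\<dots> = (\<Sum>lam\<in>F. c lam * Poly_Mapping.lookup (schur n lam) e0)"
    by (simp add: Poly_Mapping.lookup_sum lookup_ofint_mult)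
  also have "\<dots> = c lam0 * Poly_Mapping.lookup (schur n lam0) e0 +
      (\<Sum>lam\<in>F - {lam0}. c lam * Poly_Mapping.lookup (schur n lam) e0)"
    using l0(1) fin by (intro sum.remove) (auto simp: G_def)
  also have "(\<Sum>lam\<in>F - {lam0}. c lam * Poly_Mapping.lookup (schur n lam) e0) = 0"
    using zero by (intro sum.neutral) blast
  finally have "c lam0 * Poly_Mapping.lookup (schur n lam0) e0 = 0" by simp
  moreover have "c lam0 \<noteq> 0" using l0 by (simp add: G_def)
  moreover have "card {T \<in> ssyt n lam0. tab_exp lam0 T = e0} \<noteq> 0"
    using T0_ssyt[OF p0] finite_ssyt[of n lam0] unfolding e0_def
    by (subst card_0_eq) (auto)
  ultimately show False by (simp add: lookup_schur)
qed

lemma expansion_unique: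
  assumes "schur_expansion n f c1" "schur_expansion n f c2"
  shows "c1 = c2"
proof -
  define F where "F = {lam. c1 lam \<noteq> 0} \<union> {lam. c2 lam \<noteq> 0}"
  have fF: "finite F" using assms by (simp add: F_def schur_expansion_def)
  have parts: "\<forall>lam\<in>F. is_partition lam \<and> length lam \<le> n" using assms by (auto simp: F_def schur_expansion_def)
  have e1: "f = (\<Sum>lam\<in>F. of_int (c1 lam) * schur n lam)"
    using assms(1) fF unfolding schur_expansion_def
    by (auto intro!: sum.mono_neutral_left simp: F_def)
  have e2: "f = (\<Sum>lam\<in>F. of_int (c2 lam) * schur n lam)"
    using assms(2) fF unfolding schur_expansion_def
    by (auto intro!: sum.mono_neutral_left simp: F_def)
  have "(\<Sum>lam\<in>F. of_int (c1 lam - c2 lam) * schur n lam) =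
     (\<Sum>lam\<in>F. of_int (c1 lam) * schur n lam - of_int (c2 lam) * schur n lam)"
    by (intro sum.cong refl) (simp only: of_int_diff left_diff_distrib)
  also have "\<dots> = 0" unfolding sum_subtractf e1[symmetric] e2[symmetric] by simp
  finally have "(\<Sum>lam\<in>F. of_int (c1 lam - c2 lam) * schur n lam) = 0" .
  then have "\<forall>lam\<in>F. c1 lam - c2 lam = 0" by (rule schur_indep[OF fF parts])
  then show ?thesis
  proof (intro ext)
    fix lam assume h: "\<forall>lam\<in>F. c1 lam - c2 lam = 0"
    show "c1 lam = c2 lam"
    proof (cases "lam \<in> F")
      case True then show ?thesis using h by simp
    next
      case False then show ?thesis unfolding F_def by simp
    qed
  qed
qed

lemma Cop_eq:
  assumes "schur_expansion n f c"
  shows "Cop m n f = (\<Sum>lam | c lam \<noteq> 0 \<and> adapted m lam. of_int (c lam) * schur n lam)"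
proof -
  have "(THE c. schur_expansion n f c) = c"
    using assms expansion_unique by blast
  then show ?thesis by (simp add: Cop_def)
qed

lemma pt_stair:
  assumes "2 \<le> m"
  shows "pt (x # rev [2..<m] @ replicate t 1) i =
    (if i = 0 then x else if i \<le> m - 2 then m - i else if i < m - 1 + t then 1 else 0)"
proof (cases i)
  case 0 then show ?thesis by (simp add: pt_def)
next
  case (Suc j)
  have L: "length (rev [2..<m]) = m - 2" by simp
  show ?thesis
  proof (cases "j < m - 2")
    case True
    have "rev [2..<m] ! j = m - 1 - j" using True by (simp add: rev_nth)
    then show ?thesis using True Suc assms by (auto simp: pt_def nth_append)
  next
    case False
    then show ?thesis using Suc assms by (auto simp: pt_def nth_append)
  qed
qed

lemma length_stair: "2 \<le> m \<Longrightarrow> length (x # rev [2..<m] @ replicate t 1) = m - 1 + t"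
  by simp

lemma partition_stair:
  assumes "2 \<le> m" "m - 1 \<le> x"
  shows "is_partition (x # rev [2..<m] @ replicate t 1)"
  unfolding is_partition_pt
proof (intro conjI allI impI)
  fix i show "pt (x # rev [2..<m] @ replicate t 1) (Suc i) \<le> pt (x # rev [2..<m] @ replicate t 1) i"
    unfolding pt_stair[OF assms(1)] using assms by auto
next
  fix i assume "i < length (x # rev [2..<m] @ replicate t 1)"
  then have "i < m - 1 + t" using assms by simp
  then show "0 < pt (x # rev [2..<m] @ replicate t 1) i"
    unfolding pt_stair[OF assms(1)] using assms by auto
qed


lemma adapted_pt: "adapted m lam \<longleftrightarrow> (\<forall>k<length lam. int m - int (Suc k) < int (pt lam k))"
  by (simp add: adapted_def pt_def)

lemma adapted_descent:
  assumes pm: "is_partition mu" and v: "VS mu k lam" and ad: "adapted (Suc m) lam"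
  shows "adapted m mu"
  unfolding adapted_pt
proof (intro allI impI)
  fix i assume "i < length mu"
  then have "0 < pt mu i" using part_pos[OF pm] by simp
  then have "0 < pt lam i" using v by (simp add: VS_def) (metis less_le_trans)
  then have "i < length lam" using part_pos v by (simp add: VS_def)
  then have "int (Suc m) - int (Suc i) < int (pt lam i)" using ad by (simp add: adapted_pt)
  moreover have "pt lam i \<le> Suc (pt mu i)" using v by (simp add: VS_def)
  ultimately show "int m - int (Suc i) < int (pt mu i)" by linarith
qed

lemma forced:
  assumes m2: "2 \<le> m" and pg: "is_partition g" and gi: "\<forall>i. 1 \<le> i \<and> i \<le> m - 1 \<longrightarrow> pt g i = m - i"
    and ad: "adapted (Suc m) lam" and v: "VS g (m - 1) lam"
  shows "pt lam i = pt g i + (if 1 \<le> i \<and> i \<le> m - 1 then 1 else 0)"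
proof -
  have pl: "is_partition lam" using v by (simp add: VS_def)
  have up: "pt lam i = Suc (pt g i)" if "1 \<le> i" "i \<le> m - 1" for i
  proof -
    have "0 < pt g i" using gi that by simp
    then have "0 < pt lam i" using v by (simp add: VS_def) (metis less_le_trans)
    then have "i < length lam" using part_pos[OF pl] by simp
    then have "int (Suc m) - int (Suc i) < int (pt lam i)" using ad by (simp add: adapted_pt)
    moreover have "pt lam i \<le> Suc (pt g i)" using v by (simp add: VS_def)
    ultimately show ?thesis using gi that by simp
  qed
  define d where "d i = pt lam i - pt g i" for i
  have dd: "pt lam i = pt g i + d i" for i using v by (simp add: d_def VS_def)
  define L where "L = max (length lam) (length g) + m"
  have "sum_list lam = (\<Sum>i<L. pt lam i)" by (rule sum_list_pt) (simp add: L_def)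
  moreover have "sum_list g = (\<Sum>i<L. pt g i)" by (rule sum_list_pt) (simp add: L_def)
  ultimately have "(\<Sum>i<L. pt g i) + (m - 1) = (\<Sum>i<L. pt g i) + (\<Sum>i<L. d i)"
    using v by (simp add: VS_def dd sum.distrib)
  then have sd: "(\<Sum>i<L. d i) = m - 1" by simp
  have sub: "{1..m - 1} \<subseteq> {..<L}" by (auto simp: L_def)
  have "(\<Sum>i<L. d i) = (\<Sum>i\<in>{1..m-1}. d i) + (\<Sum>i\<in>{..<L} - {1..m-1}. d i)"
    using sub by (simp add: sum.subset_diff[of "{1..m-1}" "{..<L}"] add.commute)
  moreover have "(\<Sum>i\<in>{1..m-1}. d i) = m - 1" using up by (simp add: d_def)
  ultimately have "(\<Sum>i\<in>{..<L} - {1..m-1}. d i) = 0" using sd by simp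
  then have z: "\<forall>i\<in>{..<L} - {1..m-1}. d i = 0" by simp
  show ?thesis
  proof (cases "1 \<le> i \<and> i \<le> m - 1")
    case True then show ?thesis using up by simp
  next
    case False
    show ?thesis
    proof (cases "i < L")
      case True then show ?thesis using z False dd[of i] by auto
    next
      case F2: False
      then have "pt lam i = 0" "pt g i = 0" by (auto simp: pt_def L_def)
      then show ?thesis using False by simp
    qed
  qed
qed

lemma step_char:
  assumes m2: "2 \<le> m" and pg: "is_partition g" and gi: "\<forall>i. 1 \<le> i \<and> i \<le> m - 1 \<longrightarrow> pt g i = m - i"
    and pd: "is_partition d" and di: "\<forall>i. pt d i = pt g i + (if 1 \<le> i \<and> i \<le> m - 1 then 1 else 0)"
    and ad: "adapted (Suc m) lam"
  shows "VS g (m - 1) lam \<longleftrightarrow> lam = d"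
proof
  assume v: "VS g (m - 1) lam"
  show "lam = d"
    by (rule partition_eqI) (use v pd forced[OF m2 pg gi ad v] di in \<open>auto simp: VS_def\<close>)
next
  assume "lam = d"
  define L where "L = max (length d) (length g) + m"
  have "sum_list d = (\<Sum>i<L. pt d i)" by (rule sum_list_pt) (simp add: L_def)
  also have "\<dots> = (\<Sum>i<L. pt g i) + (\<Sum>i<L. if 1 \<le> i \<and> i \<le> m - 1 then 1 else 0)"
    by (simp add: di sum.distrib)
  also have "(\<Sum>i<L. if 1 \<le> i \<and> i \<le> m - 1 then 1 else (0::nat)) = card ({..<L} \<inter> {i. 1 \<le> i \<and> i \<le> m - 1})"
    by (simp add: sum.If_cases)
  also have "{..<L} \<inter> {i. 1 \<le> i \<and> i \<le> m - 1} = {1..m-1}" by (auto simp: L_def)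
  also have "(\<Sum>i<L. pt g i) = sum_list g" by (rule sum_list_pt[symmetric]) (simp add: L_def)
  finally have "sum_list d = sum_list g + (m - 1)" by simp
  then show "VS g (m - 1) lam" using \<open>lam = d\<close> pd di by (auto simp: VS_def)
qed

definition alpha :: "nat \<Rightarrow> nat \<Rightarrow> nat \<Rightarrow> nat list" where
  "alpha a b m = (a + 1) # rev [2..<m] @ replicate (b + 1 - m) 1"
definition beta :: "nat \<Rightarrow> nat \<Rightarrow> nat \<Rightarrow> nat list" where
  "beta a b m = a # rev [2..<m] @ replicate (b + 2 - m) 1"

lemma alpha_props:
  assumes "2 \<le> m" "m \<le> a" "m - 1 \<le> b"
  shows "is_partition (alpha a b m)" "adapted m (alpha a b m)" "length (alpha a b m) = b"
    "pt (alpha a b m) i = (if i = 0 then a + 1 else if i \<le> m - 2 then m - i else if i < b then 1 else 0)"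
proof -
  show pi: "pt (alpha a b m) i = (if i = 0 then a + 1 else if i \<le> m - 2 then m - i else if i < b then 1 else 0)"
    unfolding alpha_def pt_stair[OF assms(1)] using assms by auto
  show "is_partition (alpha a b m)" unfolding alpha_def by (rule partition_stair) (use assms in auto)
  show L: "length (alpha a b m) = b" unfolding alpha_def using assms by simp
  show "adapted m (alpha a b m)"
    unfolding adapted_pt L
  proof (intro allI impI)
    fix k assume "k < b"
    then show "int m - int (Suc k) < int (pt (alpha a b m) k)"
      unfolding pt_stair[OF assms(1)] alpha_def using assms by (auto simp: pt_stair[OF assms(1)])
  qed
qed

lemma beta_props:
  assumes "2 \<le> m" "m \<le> a" "m - 1 \<le> b"
  shows "is_partition (beta a b m)" "adapted m (beta a b m)" "length (beta a b m) = Suc b"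
    "pt (beta a b m) i = (if i = 0 then a else if i \<le> m - 2 then m - i else if i < Suc b then 1 else 0)"
proof -
  show pi: "pt (beta a b m) i = (if i = 0 then a else if i \<le> m - 2 then m - i else if i < Suc b then 1 else 0)"
    unfolding beta_def pt_stair[OF assms(1)] using assms by auto
  show "is_partition (beta a b m)" unfolding beta_def by (rule partition_stair) (use assms in auto)
  show L: "length (beta a b m) = Suc b" unfolding beta_def using assms by simp
  show "adapted m (beta a b m)"
    unfolding adapted_pt L
  proof (intro allI impI)
    fix k assume "k < Suc b"
    then show "int m - int (Suc k) < int (pt (beta a b m) k)"
      unfolding pt_stair[OF assms(1)] beta_def using assms by (auto simp: pt_stair[OF assms(1)])
  qed
qed

lemma schur_long_zero: "is_partition lam \<Longrightarrow> n < length lam \<Longrightarrow> schur n lam = 0"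
  by (simp add: schur_def ssyt_long_empty)

lemma expansion_mult:
  assumes ex: "schur_expansion n g c"
  shows "schur_expansion n (g * schur n (replicate k 1))
    (\<lambda>lam. if is_partition lam \<and> length lam \<le> n then (\<Sum>mu | c mu \<noteq> 0. if VS mu k lam then c mu else 0) else 0)"
    (is "schur_expansion n _ ?c'")
proof -
  define S where "S = {mu. c mu \<noteq> 0}"
  have fS: "finite S" and pS: "\<forall>mu\<in>S. is_partition mu \<and> length mu \<le> n"
    and g: "g = (\<Sum>mu\<in>S. of_int (c mu) * schur n mu)"
    using ex by (auto simp: schur_expansion_def S_def)
  define L where "L = (\<Union>mu\<in>S. {lam. VS mu k lam})"
  have fL: "finite L" unfolding L_def using fS finite_VS by blast
  have supp: "{lam. ?c' lam \<noteq> 0} \<subseteq> L"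
  proof
    fix lam assume h: "lam \<in> {lam. ?c' lam \<noteq> 0}"
    show "lam \<in> L"
    proof (rule ccontr)
      assume "lam \<notin> L"
      then have "\<forall>mu\<in>S. \<not> VS mu k lam" by (auto simp: L_def)
      then have "(\<Sum>mu\<in>S. if VS mu k lam then c mu else 0) = 0" by (intro sum.neutral) simp
      then have "?c' lam = 0" unfolding S_def by simp
      then show False using h by simp
    qed
  qed
  have "g * schur n (replicate k 1) = (\<Sum>mu\<in>S. of_int (c mu) * (schur n mu * schur n (replicate k 1)))"
    unfolding g by (simp add: sum_distrib_right mult.assoc)
  also have "\<dots> = (\<Sum>mu\<in>S. \<Sum>lam\<in>L. of_int (if VS mu k lam then c mu else 0) * schur n lam)"
  proof (rule sum.cong[OF refl])
    fix mu assume mu: "mu \<in> S"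
    have sub: "{lam. VS mu k lam} \<subseteq> L" using mu by (auto simp: L_def)
    have "(\<Sum>lam\<in>L. of_int (if VS mu k lam then c mu else 0) * schur n lam) =
        (\<Sum>lam\<in>L. if VS mu k lam then of_int (c mu) * schur n lam else 0)"
      by (intro sum.cong refl) simp
    also have "\<dots> = (\<Sum>lam\<in>{lam \<in> L. VS mu k lam}. of_int (c mu) * schur n lam)"
      by (simp add: sum.inter_filter[OF fL])
    also have "{lam \<in> L. VS mu k lam} = {lam. VS mu k lam}" using sub by auto
    also have "(\<Sum>lam\<in>{lam. VS mu k lam}. of_int (c mu) * schur n lam) =
        of_int (c mu) * (schur n mu * schur n (replicate k 1))"
      using pieri[of mu n k] mu pS by (simp add: sum_distrib_left)
    finally show "of_int (c mu) * (schur n mu * schur n (replicate k 1)) =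
        (\<Sum>lam\<in>L. of_int (if VS mu k lam then c mu else 0) * schur n lam)" by simp
  qed
  also have "\<dots> = (\<Sum>lam\<in>L. \<Sum>mu\<in>S. of_int (if VS mu k lam then c mu else 0) * schur n lam)"
    by (rule sum.swap)
  also have "\<dots> = (\<Sum>lam\<in>L. of_int (?c' lam) * schur n lam)"
  proof (rule sum.cong[OF refl])
    fix lam assume lam: "lam \<in> L"
    then have pl: "is_partition lam" by (auto simp: L_def VS_def)
    show "(\<Sum>mu\<in>S. of_int (if VS mu k lam then c mu else 0) * schur n lam) = of_int (?c' lam) * schur n lam"
    proof (cases "length lam \<le> n")
      case True
      then show ?thesis using pl by (simp add: sum_distrib_right[symmetric] S_def)
    next
      case False
      then show ?thesis using pl schur_long_zero[of lam n] by simp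
    qed
  qed
  also have "\<dots> = (\<Sum>lam | ?c' lam \<noteq> 0. of_int (?c' lam) * schur n lam)"
    using supp fL by (intro sum.mono_neutral_right) auto
  finally have eq: "g * schur n (replicate k 1) = (\<Sum>lam | ?c' lam \<noteq> 0. of_int (?c' lam) * schur n lam)" .
  have A: "\<forall>lam. ?c' lam \<noteq> 0 \<longrightarrow> is_partition lam \<and> length lam \<le> n"
    by (intro allI impI) (simp split: if_splits)
  have B: "finite {lam. ?c' lam \<noteq> 0}" using supp fL by (rule finite_subset)
  show ?thesis unfolding schur_expansion_def using A B eq by blast
qed


lemma pt_single: "pt [a] i = (if i = 0 then a else 0)"
  by (simp add: pt_def)

lemma base_char:
  assumes a: "2 \<le> a" and b: "1 \<le> b"
  shows "VS [a] b lam \<longleftrightarrow> lam = alpha a b 2 \<or> lam = beta a b 2"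
proof
  assume v: "VS [a] b lam"
  have pl: "is_partition lam" using v by (simp add: VS_def)
  have p0: "pt lam 0 = a \<or> pt lam 0 = Suc a" using VS_bounds[OF v, of 0] by (simp add: pt_single)
  have pi: "pt lam i \<le> 1" if "1 \<le> i" for i using v that by (auto simp: VS_def pt_single dest: spec[of _ i])
  have l0: "0 < length lam" using p0 a part_pos[OF pl, of 0] by auto
  define t where "t = length lam - 1"
  have lam: "lam = pt lam 0 # replicate t 1"
  proof (rule nth_equalityI)
    show "length lam = length (pt lam 0 # replicate t 1)" using l0 by (simp add: t_def)
    fix i assume "i < length lam"
    then show "lam ! i = (pt lam 0 # replicate t 1) ! i"
    proof (cases i)
      case 0 then show ?thesis using l0 by (simp add: pt_def)
    next
      case (Suc j)
      have "0 < pt lam i" using part_pos[OF pl, of i] \<open>i < length lam\<close> by simp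
      moreover have "pt lam i \<le> 1" using pi Suc by simp
      ultimately have "lam ! i = 1" using \<open>i < length lam\<close> by (simp add: pt_def)
      then show ?thesis using Suc \<open>i < length lam\<close> by (simp add: t_def)
    qed
  qed
  have "sum_list lam = pt lam 0 + t" by (subst lam) (simp add: sum_list_replicate)
  moreover have "sum_list lam = a + b" using v by (simp add: VS_def)
  ultimately have st: "pt lam 0 + t = a + b" by simp
  show "lam = alpha a b 2 \<or> lam = beta a b 2"
  proof (cases "pt lam 0 = a")
    case True
    then have "t = b" using st by simp
    then have "lam = beta a b 2" using lam True by (simp add: beta_def)
    then show ?thesis by simp
  next
    case False
    then have "pt lam 0 = Suc a" using p0 by simp
    moreover then have "t = b - 1" using st by simp
    ultimately have "lam = alpha a b 2" using lam by (simp add: alpha_def sum_list_replicate)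
    then show ?thesis by simp
  qed
next
  assume "lam = alpha a b 2 \<or> lam = beta a b 2"
  then show "VS [a] b lam"
  proof
    assume l: "lam = alpha a b 2"
    have "is_partition lam" using alpha_props(1)[of 2 a b] a b l by simp
    moreover have "\<forall>i. pt [a] i \<le> pt lam i \<and> pt lam i \<le> Suc (pt [a] i)"
      using alpha_props(4)[of 2 a b] a b l by (simp add: pt_single)
    moreover have "sum_list lam = sum_list [a] + b" using l b by (simp add: alpha_def sum_list_replicate)
    ultimately show ?thesis by (simp add: VS_def)
  next
    assume l: "lam = beta a b 2"
    have "is_partition lam" using beta_props(1)[of 2 a b] a b l by simp
    moreover have "\<forall>i. pt [a] i \<le> pt lam i \<and> pt lam i \<le> Suc (pt [a] i)"
      using beta_props(4)[of 2 a b] a b l by (simp add: pt_single)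
    moreover have "sum_list lam = sum_list [a] + b" using l b by (simp add: beta_def sum_list_replicate)
    ultimately show ?thesis by (simp add: VS_def)
  qed
qed

definition fprod :: "nat \<Rightarrow> nat \<Rightarrow> nat \<Rightarrow> nat \<Rightarrow> ipoly" where
  "fprod n a b m = schur n [a] * schur n (replicate b 1) * (\<Prod>k\<in>{1..m-2}. schur n (replicate k 1))"

lemma fprod_Suc: "2 \<le> m \<Longrightarrow> fprod n a b (Suc m) = fprod n a b m * schur n (replicate (m - 1) 1)"
proof -
  assume m: "2 \<le> m"
  have "{1..Suc m - 2} = insert (m - 1) {1..m-2}" using m by auto
  moreover have "m - 1 \<notin> {1..m-2}" using m by auto
  ultimately have "(\<Prod>k\<in>{1..Suc m - 2}. schur n (replicate k 1)) =
      schur n (replicate (m - 1) 1) * (\<Prod>k\<in>{1..m-2}. schur n (replicate k 1))"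
    by simp
  then show ?thesis unfolding fprod_def by (simp add: ac_simps)
qed

lemma main_claim:
  assumes n: "Suc b \<le> n"
  shows "2 \<le> m \<Longrightarrow> m \<le> a \<Longrightarrow> m - 1 \<le> b \<Longrightarrow> \<exists>c. schur_expansion n (fprod n a b m) c \<and>
    (\<forall>lam. adapted m lam \<longrightarrow> c lam = (if lam = alpha a b m \<or> lam = beta a b m then 1 else 0))"
proof (induction m)
  case 0 then show ?case by simp
next
  case (Suc m)
  show ?case
  proof (cases "m < 2")
    case True
    then have m1: "Suc m = 2" using Suc.prems by simp
    have a2: "2 \<le> a" and b1: "1 \<le> b" using Suc.prems m1 by auto
    define c0 where "c0 lam = (if lam = [a] then (1::int) else 0)" for lam
    have s0: "{mu. c0 mu \<noteq> 0} = {[a]}" by (auto simp: c0_def)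
    have pa: "is_partition [a]" using a2 by (simp add: is_partition_def)
    have e0: "schur_expansion n (schur n [a]) c0"
      unfolding schur_expansion_def s0 using pa n by (auto simp: c0_def)
    have fp: "fprod n a b (Suc m) = schur n [a] * schur n (replicate b 1)"
      using m1 by (simp add: fprod_def)
    define c where "c lam = (if is_partition lam \<and> length lam \<le> n then
        (\<Sum>mu | c0 mu \<noteq> 0. if VS mu b lam then c0 mu else 0) else 0)" for lam
    have ex: "schur_expansion n (fprod n a b (Suc m)) c"
      unfolding fp c_def by (rule expansion_mult[OF e0])
    have cv: "c lam = (if lam = alpha a b 2 \<or> lam = beta a b 2 then 1 else 0)" for lam
    proof (cases "is_partition lam \<and> length lam \<le> n")
      case True
      then show ?thesis unfolding c_def s0 using base_char[OF a2 b1, of lam] by (simp add: c0_def)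
    next
      case False
      have "is_partition (alpha a b 2) \<and> length (alpha a b 2) \<le> n"
        using alpha_props[of 2 a b] a2 b1 n by simp
      moreover have "is_partition (beta a b 2) \<and> length (beta a b 2) \<le> n"
        using beta_props[of 2 a b] a2 b1 n by simp
      ultimately show ?thesis using False by (auto simp: c_def)
    qed
    show ?thesis unfolding m1 using ex[unfolded m1] cv by blast
  next
    case False
    then have m2: "2 \<le> m" by simp
    have am: "Suc m \<le> a" and bm: "m \<le> b" using Suc.prems by auto
    have "\<exists>c. schur_expansion n (fprod n a b m) c \<and>
      (\<forall>lam. adapted m lam \<longrightarrow> c lam = (if lam = alpha a b m \<or> lam = beta a b m then 1 else 0))"
      by (rule Suc.IH) (use m2 am bm in auto)
    then obtain c where ex: "schur_expansion n (fprod n a b m) c"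
      and cv: "\<forall>lam. adapted m lam \<longrightarrow> c lam = (if lam = alpha a b m \<or> lam = beta a b m then 1 else 0)"
      by blast
    define A where "A = alpha a b m"
    define B where "B = beta a b m"
    define A' where "A' = alpha a b (Suc m)"
    define B' where "B' = beta a b (Suc m)"
    have hA: "is_partition A" "adapted m A" "length A = b"
      "\<And>i. pt A i = (if i = 0 then a + 1 else if i \<le> m - 2 then m - i else if i < b then 1 else 0)"
      using alpha_props[of m a b] m2 am bm unfolding A_def by auto
    have hB: "is_partition B" "adapted m B" "length B = Suc b"
      "\<And>i. pt B i = (if i = 0 then a else if i \<le> m - 2 then m - i else if i < Suc b then 1 else 0)"
      using beta_props[of m a b] m2 am bm unfolding B_def by auto
    have hA': "is_partition A'" "length A' = b"
      "\<And>i. pt A' i = (if i = 0 then a + 1 else if i \<le> Suc m - 2 then Suc m - i else if i < b then 1 else 0)"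
      using alpha_props[of "Suc m" a b] m2 am bm unfolding A'_def by auto
    have hB': "is_partition B'" "length B' = Suc b"
      "\<And>i. pt B' i = (if i = 0 then a else if i \<le> Suc m - 2 then Suc m - i else if i < Suc b then 1 else 0)"
      using beta_props[of "Suc m" a b] m2 am bm unfolding B'_def by auto
    have AB: "A \<noteq> B" unfolding A_def B_def alpha_def beta_def by simp
    have AB': "A' \<noteq> B'" unfolding A'_def B'_def alpha_def beta_def by simp
    have gA: "\<forall>i. 1 \<le> i \<and> i \<le> m - 1 \<longrightarrow> pt A i = m - i" using hA(4) m2 bm by auto
    have gB: "\<forall>i. 1 \<le> i \<and> i \<le> m - 1 \<longrightarrow> pt B i = m - i" using hB(4) m2 bm by auto
    have dA: "\<forall>i. pt A' i = pt A i + (if 1 \<le> i \<and> i \<le> m - 1 then 1 else 0)"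
      using hA(4) hA'(3) m2 bm by auto
    have dB: "\<forall>i. pt B' i = pt B i + (if 1 \<le> i \<and> i \<le> m - 1 then 1 else 0)"
      using hB(4) hB'(3) m2 bm by auto
    have cA: "c A = 1" using cv hA(2) by (simp add: A_def)
    have cB: "c B = 1" using cv hB(2) AB by (simp add: B_def A_def[symmetric])
    define S where "S = {mu. c mu \<noteq> 0}"
    have fS: "finite S" and pS: "\<forall>mu\<in>S. is_partition mu" using ex by (auto simp: schur_expansion_def S_def)
    have AS: "A \<in> S" and BS: "B \<in> S" using cA cB by (auto simp: S_def)
    define c' where "c' lam = (if is_partition lam \<and> length lam \<le> n then
        (\<Sum>mu | c mu \<noteq> 0. if VS mu (m - 1) lam then c mu else 0) else 0)" for lam
    have ex': "schur_expansion n (fprod n a b (Suc m)) c'"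
      unfolding fprod_Suc[OF m2] c'_def by (rule expansion_mult[OF ex])
    have cv': "c' lam = (if lam = A' \<or> lam = B' then 1 else 0)" if ad: "adapted (Suc m) lam" for lam
    proof (cases "is_partition lam \<and> length lam \<le> n")
      case True
      have stA: "VS A (m - 1) lam \<longleftrightarrow> lam = A'" by (rule step_char[OF m2 hA(1) gA hA'(1) dA ad])
      have stB: "VS B (m - 1) lam \<longleftrightarrow> lam = B'" by (rule step_char[OF m2 hB(1) gB hB'(1) dB ad])
      have "(\<Sum>mu\<in>S. if VS mu (m - 1) lam then c mu else 0) =
          (\<Sum>mu\<in>S. (if mu = A then (if VS A (m - 1) lam then 1 else 0) else 0) +
                   (if mu = B then (if VS B (m - 1) lam then 1 else 0) else 0))"
      proof (rule sum.cong[OF refl])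
        fix mu assume mu: "mu \<in> S"
        show "(if VS mu (m - 1) lam then c mu else 0) =
          (if mu = A then (if VS A (m - 1) lam then 1 else 0) else 0) +
          (if mu = B then (if VS B (m - 1) lam then 1 else 0) else 0)"
        proof (cases "VS mu (m - 1) lam")
          case True
          then have "adapted m mu" using adapted_descent[OF _ True ad] pS mu by blast
          then have "c mu = (if mu = A \<or> mu = B then 1 else 0)" using cv by (simp add: A_def B_def)
          then show ?thesis using True AB by auto
        next
          case False then show ?thesis using AB by auto
        qed
      qed
      also have "\<dots> = (if VS A (m - 1) lam then 1 else 0) + (if VS B (m - 1) lam then 1 else 0)"
        using fS AS BS by (simp add: sum.distrib)
      finally have "c' lam = (if lam = A' then 1 else 0) + (if lam = B' then 1 else 0)"
        using True stA stB by (simp add: c'_def S_def)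
      then show ?thesis using AB' by auto
    next
      case False
      then show ?thesis using hA' hB' n by (auto simp: c'_def)
    qed
    show ?thesis using ex' cv' unfolding A'_def B'_def by blast
  qed
qed

theorem lemma5p4:
  fixes m a b :: nat
  assumes "m \<ge> 2" and "a \<ge> m" and "b \<ge> m - 1"
  shows "\<exists>N. \<forall>n\<ge>N.
    Cop m n (schur n [a] * schur n (replicate b 1) *
             (\<Prod>k\<in>{1..m-2}. schur n (replicate k 1)))
    = schur n ((a + 1) # rev [2..<m] @ replicate (b + 1 - m) 1)
      + schur n (a # rev [2..<m] @ replicate (b + 2 - m) 1)"
proof (intro exI[of _ "Suc b"] allI impI)
  fix n assume n: "Suc b \<le> n"
  obtain c where ex: "schur_expansion n (fprod n a b m) c"
    and cv: "\<forall>lam. adapted m lam \<longrightarrow> c lam = (if lam = alpha a b m \<or> lam = beta a b m then 1 else 0)"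
    using main_claim[OF n assms] by blast
  have hA: "adapted m (alpha a b m)" using alpha_props[OF assms] by simp
  have hB: "adapted m (beta a b m)" using beta_props[OF assms] by simp
  have AB: "alpha a b m \<noteq> beta a b m" unfolding alpha_def beta_def by simp
  have set: "{lam. c lam \<noteq> 0 \<and> adapted m lam} = {alpha a b m, beta a b m}"
    using cv hA hB by (auto split: if_splits)
  have "Cop m n (fprod n a b m) = (\<Sum>lam | c lam \<noteq> 0 \<and> adapted m lam. of_int (c lam) * schur n lam)"
    by (rule Cop_eq[OF ex])
  also have "\<dots> = schur n (alpha a b m) + schur n (beta a b m)"
    unfolding set using AB cv hA hB by simp
  finally show "Cop m n (schur n [a] * schur n (replicate b 1) * (\<Prod>k\<in>{1..m-2}. schur n (replicate k 1)))
    = schur n ((a + 1) # rev [2..<m] @ replicate (b + 1 - m) 1) + schur n (a # rev [2..<m] @ replicate (b + 2 - m) 1)"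
    unfolding fprod_def alpha_def beta_def .
qed

end
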